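(* Let $N\ge2$, $\Omega=\mathbb{R}^{N-1}\times(0,\infty)$, $\phi\in L^p(\Omega)$ with $p\in[1,\infty)$, and let $z_{\epsilon,k}$, $z^N_\epsilon$, $z^D_\epsilon$, $f_p$ be as in the context. Then for every $T>0$, \[\sup_{(x,t)\in\overline\Omega\times(T,\infty)}|z_{\epsilon,k}(x,t)|=O(\epsilon^{\frac N{2p}})\ \text{as }\epsilon\to0^+\text{ for each fixed }k>0,\qquad \sup_{(x,t)\in\overline\Omega\times(T,\infty)}|z^N_\epsilon(x,t)|=O(\epsilon^{\frac N{2p}})\ \text{as }\epsilon\to0^+,\] and for every $R>0$ and fixed $\epsilon>0$, $\sup_{(x,t)\in Q(R)}|z_{\epsilon,k}(x,t)-z^D_\epsilon(x,t)|=O(f_p(k))$ as $k\to\infty$.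
   Context: $x=(x',x_N)$. $\Gamma_d(x,t)=(4\pi t)^{-d/2}e^{-|x|^2/(4t)}$, $\partial_\xi\Gamma_1$ the spatial derivative of $\Gamma_1$, $y^*=(y',-y_N)$, $G_0(x,y,s)=\Gamma_N(x-y,s)-\Gamma_N(x-y^*,s)$, $G_N(x,y,s)=\Gamma_N(x-y,s)+\Gamma_N(x-y^*,s)$. For $\epsilon>0$, $k\ge0$: $\Psi_{\epsilon,k}(x,y,t)=G_0(x,y,t/\epsilon)-2\int_0^\infty\Gamma_{N-1}(x'-y',\frac t\epsilon+k\tau)\partial_\xi\Gamma_1(x_N+y_N+\tau,\frac t\epsilon)d\tau$; $z_{\epsilon,k}(x,t)=\int_\Omega\Psi_{\epsilon,k}(x,y,t)\phi(y)dy$ (solution of $\epsilon\partial_tu=\Delta u$ in $\Omega$, $-k\Delta'u-\partial_{x_N}u=0$ on $\partial\Omega$, $u(0)=\phi$); $z^N_\epsilon(x,t)=\int_\Omega G_N(x,y,t/\epsilon)\phi(y)dy$ (Neumann problem); $z^D_\epsilon(x,t)=\int_\Omega G_0(x,y,t/\epsilon)\phi(y)dy$ (homogeneous Dirichlet problem). $Q(R)=\{(x,t)\in\overline\Omega\times(0,\infty):x_N+t>R\}$. With $p_N=(N-1)/2$, $f_p(r)=r^{-1}$ if $p<p_N$, $r^{-1}\log r$ if $p=p_N$, $r^{-\frac{N-1}{2p}}$ if $p>p_N$, for $r>1$. *)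

theory Defs
  imports "HOL-Analysis.Analysis"
begin

text \<open>Points of R^N are pairs (x', x_N) with x' :: 'a, DIM('a) = N - 1.\<close>

definition heat :: "'b::euclidean_space \<Rightarrow> real \<Rightarrow> real" where
  "heat x t = (4 * pi * t) powr (- real DIM('b) / 2) * exp (- (norm x ^ 2) / (4 * t))"

definition dheat1 :: "real \<Rightarrow> real \<Rightarrow> real" where
  "dheat1 \<xi> t = deriv (\<lambda>\<eta>::real. heat \<eta> t) \<xi>"

definition Omega :: "('a::euclidean_space \<times> real) set" where
  "Omega = UNIV \<times> {0<..}"

definition reflN :: "'a::euclidean_space \<times> real \<Rightarrow> 'a \<times> real" where
  "reflN y = (fst y, - snd y)"

definition G0 :: "'a::euclidean_space \<times> real \<Rightarrow> 'a \<times> real \<Rightarrow> real \<Rightarrow> real" where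
  "G0 x y s = heat (x - y) s - heat (x - reflN y) s"

definition GN :: "'a::euclidean_space \<times> real \<Rightarrow> 'a \<times> real \<Rightarrow> real \<Rightarrow> real" where
  "GN x y s = heat (x - y) s + heat (x - reflN y) s"

definition Psi :: "real \<Rightarrow> real \<Rightarrow> 'a::euclidean_space \<times> real \<Rightarrow> 'a \<times> real \<Rightarrow> real \<Rightarrow> real" where
  "Psi \<epsilon> k x y t = G0 x y (t / \<epsilon>)
     - 2 * (LBINT \<tau>:{0<..}. heat (fst x - fst y) (t / \<epsilon> + k * \<tau>)
                              * dheat1 (snd x + snd y + \<tau>) (t / \<epsilon>))"

definition zek :: "real \<Rightarrow> real \<Rightarrow> ('a::euclidean_space \<times> real \<Rightarrow> real) \<Rightarrow> 'a \<times> real \<Rightarrow> real \<Rightarrow> real" where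
  "zek \<epsilon> k \<phi> x t = (LINT y:Omega|lebesgue. Psi \<epsilon> k x y t * \<phi> y)"

definition zN :: "real \<Rightarrow> ('a::euclidean_space \<times> real \<Rightarrow> real) \<Rightarrow> 'a \<times> real \<Rightarrow> real \<Rightarrow> real" where
  "zN \<epsilon> \<phi> x t = (LINT y:Omega|lebesgue. GN x y (t / \<epsilon>) * \<phi> y)"

definition zD :: "real \<Rightarrow> ('a::euclidean_space \<times> real \<Rightarrow> real) \<Rightarrow> 'a \<times> real \<Rightarrow> real \<Rightarrow> real" where
  "zD \<epsilon> \<phi> x t = (LINT y:Omega|lebesgue. G0 x y (t / \<epsilon>) * \<phi> y)"

definition Qset :: "real \<Rightarrow> (('a::euclidean_space \<times> real) \<times> real) set" where
  "Qset R = {(x, t). x \<in> closure Omega \<and> t > 0 \<and> snd x + t > R}"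

text \<open>f_p with N the space dimension, p_N = (N-1)/2\<close>
definition fp :: "nat \<Rightarrow> real \<Rightarrow> real \<Rightarrow> real" where
  "fp N p r = (if p < (real N - 1) / 2 then 1 / r
               else if p = (real N - 1) / 2 then ln r / r
               else r powr (- (real N - 1) / (2 * p)))"

end

theory Submission
  imports Defs "HOL-Probability.Distributions"
begin

lemma heat_pos: "t > 0 \<Longrightarrow> heat x t > 0"
  by (simp add: heat_def)

lemma heat_prod:
  fixes y :: "'b::euclidean_space"
  assumes "t > 0"
  shows "heat y t = (\<Prod>b\<in>Basis. normal_density 0 (sqrt (2*t)) (y \<bullet> b))"
proof -
  have n: "norm y ^ 2 = (\<Sum>b\<in>Basis. (y \<bullet> b)^2)"
    by (simp add: power2_norm_eq_inner) (subst euclidean_inner, simp add: power2_eq_square)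
  have s2: "(sqrt (2*t))\<^sup>2 = 2 * t" using assms by simp
  have c: "1 / sqrt (2 * pi * (sqrt (2*t))\<^sup>2) = (4 * pi * t) powr (-1/2)"
    using assms unfolding s2 by (simp add: powr_minus_divide powr_half_sqrt[symmetric] field_simps)
  have "(4 * pi * t) powr (- real DIM('b) / 2) = ((4 * pi * t) powr (-1/2)) ^ DIM('b)"
    using assms by (simp add: powr_realpow[symmetric] powr_powr)
  also have "\<dots> = (\<Prod>b\<in>(Basis::'b set). 1 / sqrt (2 * pi * (sqrt (2*t))\<^sup>2))"
    by (simp add: c)
  finally have 1: "(4 * pi * t) powr (- real DIM('b) / 2) = \<dots>" .
  have 2: "exp (- (norm y ^ 2) / (4 * t)) = (\<Prod>b\<in>(Basis::'b set). exp (- ((inner y b)\<^sup>2) / (2 * (sqrt (2*t))\<^sup>2)))"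
    using assms by (simp add: n exp_sum[symmetric] sum_negf sum_divide_distrib[symmetric])
  show ?thesis
    unfolding heat_def normal_density_def 1 2 prod.distrib by simp
qed

lemma nn_integral_normal_density: "s > 0 \<Longrightarrow> (\<integral>\<^sup>+x. ennreal (normal_density m s x) \<partial>lborel) = 1"
proof -
  assume "s > 0"
  have 1: "integrable lborel (normal_density m s)" using \<open>s > 0\<close> by simp
  have 2: "(\<integral>x. normal_density m s x \<partial>lborel) = 1" using \<open>s > 0\<close> by simp
  show ?thesis by (subst nn_integral_eq_integral[OF 1]) (auto simp: 2)
qed

lemma heat_integral:
  fixes x0 :: "'b::euclidean_space"
  assumes "t > 0"
  shows "(\<integral>\<^sup>+y. ennreal (heat (y - x0) t) \<partial>lborel) = 1"
proof -
  have "(\<integral>\<^sup>+y. ennreal (heat (y - x0) t) \<partial>lborel)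
     = (\<integral>\<^sup>+y. (\<Prod>b\<in>Basis. ennreal (normal_density (x0 \<bullet> b) (sqrt (2*t)) (y \<bullet> b))) \<partial>lborel)"
    using assms by (intro nn_integral_cong)
      (simp add: heat_prod prod_ennreal normal_density_def inner_diff_left)
  also have "\<dots> = (\<Prod>b\<in>(Basis::'b set). (\<integral>\<^sup>+x. ennreal (normal_density (x0 \<bullet> b) (sqrt (2*t)) x) \<partial>lborel))"
    by (subst nn_integral_lborel_prod) auto
  also have "\<dots> = 1" using assms by (simp add: nn_integral_normal_density)
  finally show ?thesis .
qed

lemma closure_Omega: "closure (Omega :: ('a::euclidean_space \<times> real) set) = UNIV \<times> {0..}"
  by (simp add: Omega_def closure_Times)

lemma heat_measurable[measurable]:
  assumes [measurable]: "f \<in> borel_measurable M" "g \<in> borel_measurable M"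
  shows "(\<lambda>x. heat (f x) (g x)) \<in> borel_measurable M"
  unfolding heat_def by measurable

lemma heat_le: "t > 0 \<Longrightarrow> heat x t \<le> (4 * pi * t) powr (- real DIM('b) / 2)"
  for x :: "'b::euclidean_space"
  by (simp add: heat_def)

lemma heat_real: "heat (\<xi>::real) t = (4 * pi * t) powr (-1/2) * exp (- (\<xi>^2) / (4 * t))"
  by (simp add: heat_def)

lemma dheat1_eq:
  assumes "t > 0"
  shows "dheat1 \<xi> t = - (\<xi> / (2 * t)) * heat \<xi> t"
proof -
  have i: "((\<lambda>\<eta>::real. - (\<eta>^2) / (4 * t)) has_real_derivative (- (2 * \<xi>) / (4 * t))) (at \<xi>)"
    using assms by (auto intro!: derivative_eq_intros)
  have "((\<lambda>\<eta>::real. heat \<eta> t) has_real_derivative ((4 * pi * t) powr (-1/2) * (exp (- (\<xi>^2) / (4 * t)) * (- (2 * \<xi>) / (4 * t))))) (at \<xi>)"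
    unfolding heat_real by (intro DERIV_cmult DERIV_fun_exp i)
  moreover have "(4 * pi * t) powr (-1/2) * (exp (- (\<xi>^2) / (4 * t)) * (- (2 * \<xi>) / (4 * t))) = - (\<xi> / (2 * t)) * heat \<xi> t"
    using assms unfolding heat_real by (simp add: field_simps)
  ultimately have "((\<lambda>\<eta>::real. heat \<eta> t) has_real_derivative (- (\<xi> / (2 * t)) * heat \<xi> t)) (at \<xi>)" by metis
  then show ?thesis unfolding dheat1_def by (rule DERIV_imp_deriv)
qed


lemma young_aux:
  fixes f \<mu> p :: real
  assumes "1 \<le> p" "0 \<le> f" "0 < \<mu>"
  shows "f \<le> f powr p * \<mu> powr (1 - p) / p + \<mu>"
proof (cases "p = 1 \<or> f = 0")
  case True
  then show ?thesis using assms by auto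
next
  case False
  then have p1: "p > 1" and f0: "f > 0" using assms by auto
  define q where "q = p / (p - 1)"
  have q1: "q > 1" using p1 by (simp add: q_def field_simps)
  have pq: "1/p + 1/q = 1" using p1 by (simp add: q_def field_simps)
  define a where "a = f * \<mu> powr ((1 - p) / p)"
  define b where "b = \<mu> powr ((p - 1) / p)"
  have ab: "a * b = f"
    using assms p1 by (simp add: a_def b_def mult.assoc powr_add[symmetric] field_simps)
  have y: "a * b \<le> a powr p / p + b powr q / q"
    using Youngs_inequality[OF p1 q1 pq] assms by (simp add: a_def b_def)
  have e1: "a powr p = f powr p * \<mu> powr (1 - p)"
    using assms p1 by (simp add: a_def powr_mult powr_powr)
  have e2: "b powr q = \<mu>"
    using assms p1 by (simp add: b_def powr_powr q_def)
  have "\<mu> / q \<le> \<mu>" using q1 assms by (simp add: divide_le_eq)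
  moreover have "f \<le> f powr p * \<mu> powr (1 - p) / p + \<mu> / q"
    using y unfolding ab e1 e2 .
  ultimately show ?thesis by linarith
qed

lemma young_kernel_pt:
  fixes f K A M p :: real
  assumes "1 \<le> p" "0 \<le> f" "0 < A" "0 \<le> K" "K \<le> A * M"
  shows "f * K \<le> f powr p * (A powr (1/p) * M) / p + K * A powr (1/p)"
proof -
  define \<mu> where "\<mu> = A powr (1/p)"
  have mu: "\<mu> > 0" using assms by (simp add: \<mu>_def)
  have Amu: "A * \<mu> powr (1 - p) = \<mu>"
  proof -
    have "A = \<mu> powr p" using assms by (simp add: \<mu>_def powr_powr)
    then have "A * \<mu> powr (1 - p) = \<mu> powr (p + (1 - p))" using mu by (simp add: powr_add[symmetric])
    then show ?thesis using mu by simp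
  qed
  have "f * K \<le> (f powr p * \<mu> powr (1 - p) / p + \<mu>) * K"
    using young_aux[OF assms(1,2) mu] assms by (intro mult_right_mono) auto
  also have "\<dots> = K * (f powr p * \<mu> powr (1 - p)) / p + K * \<mu>" by (simp add: algebra_simps)
  also have "\<dots> \<le> (A * M) * (f powr p * \<mu> powr (1 - p)) / p + K * \<mu>"
    using assms mu by (intro add_right_mono divide_right_mono mult_right_mono) auto
  also have "(A * M) * (f powr p * \<mu> powr (1 - p)) = f powr p * (\<mu> * M)"
    using Amu by (metis mult.commute mult.left_commute)
  finally show ?thesis by (simp add: \<mu>_def)
qed


lemma young_kernel:
  fixes \<phi> :: "'c::euclidean_space \<Rightarrow> real" and K :: "'c \<Rightarrow> real \<Rightarrow> real" and A M :: "real \<Rightarrow> real"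
  assumes p: "1 \<le> p"
    and phim: "(\<lambda>y. indicator \<Omega> y * \<bar>\<phi> y\<bar> powr p) \<in> borel_measurable lebesgue"
    and Phi: "(\<integral>\<^sup>+y. ennreal (indicator \<Omega> y * \<bar>\<phi> y\<bar> powr p) \<partial>lebesgue) \<le> ennreal \<Phi>"
    and [measurable]: "\<Omega> \<in> sets borel" "T \<in> sets borel" "case_prod K \<in> borel_measurable borel"
       "A \<in> borel_measurable borel" "M \<in> borel_measurable borel"
    and K0: "\<And>y \<tau>. 0 \<le> K y \<tau>"
    and Kb: "\<And>y \<tau>. y \<in> \<Omega> \<Longrightarrow> \<tau> \<in> T \<Longrightarrow> K y \<tau> \<le> A \<tau> * M \<tau>"
    and Mb: "\<And>\<tau>. \<tau> \<in> T \<Longrightarrow> (\<integral>\<^sup>+y. ennreal (indicator \<Omega> y * K y \<tau>) \<partial>lborel) \<le> ennreal (M \<tau>)"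
    and A0: "\<And>\<tau>. \<tau> \<in> T \<Longrightarrow> 0 < A \<tau>"
    and M0: "\<And>\<tau>. \<tau> \<in> T \<Longrightarrow> 0 \<le> M \<tau>"
    and W: "(\<integral>\<^sup>+\<tau>. ennreal (indicator T \<tau> * (A \<tau> powr (1/p) * M \<tau>)) \<partial>lborel) \<le> ennreal w"
    and w0: "0 \<le> w" and Phi0: "0 \<le> \<Phi>"
  shows "(\<integral>\<^sup>+y. ennreal (indicator \<Omega> y * \<bar>\<phi> y\<bar>) * (\<integral>\<^sup>+\<tau>. ennreal (indicator T \<tau> * K y \<tau>) \<partial>lborel) \<partial>lebesgue)
          \<le> ennreal ((\<Phi> / p + 1) * w)"
proof -
  have Kpm[measurable]: "case_prod K \<in> borel_measurable (lborel \<Otimes>\<^sub>M lborel)"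
    unfolding lborel_prod by simp
  have Ky[measurable]: "(\<lambda>\<tau>. K y \<tau>) \<in> borel_measurable lborel" for y
    using measurable_Pair2[OF Kpm, of y] by simp
  define b where "b y = (\<integral>\<^sup>+\<tau>. ennreal (indicator \<Omega> y * indicator T \<tau> * K y \<tau> * A \<tau> powr (1/p)) \<partial>lborel)" for y
  have bm: "b \<in> borel_measurable lborel"
    unfolding b_def by measurable
  have pt: "ennreal (indicator \<Omega> y * \<bar>\<phi> y\<bar>) * (\<integral>\<^sup>+\<tau>. ennreal (indicator T \<tau> * K y \<tau>) \<partial>lborel)
      \<le> ennreal (indicator \<Omega> y * \<bar>\<phi> y\<bar> powr p / p) * ennreal w + b y" for y
  proof -
    have "ennreal (indicator \<Omega> y * \<bar>\<phi> y\<bar>) * (\<integral>\<^sup>+\<tau>. ennreal (indicator T \<tau> * K y \<tau>) \<partial>lborel)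
       = (\<integral>\<^sup>+\<tau>. ennreal (indicator \<Omega> y * \<bar>\<phi> y\<bar>) * ennreal (indicator T \<tau> * K y \<tau>) \<partial>lborel)"
      by (rule nn_integral_cmult[symmetric]) measurable
    also have "\<dots> \<le> (\<integral>\<^sup>+\<tau>. ennreal (indicator \<Omega> y * \<bar>\<phi> y\<bar> powr p / p) * ennreal (indicator T \<tau> * (A \<tau> powr (1/p) * M \<tau>))
                   + ennreal (indicator \<Omega> y * indicator T \<tau> * K y \<tau> * A \<tau> powr (1/p)) \<partial>lborel)"
    proof (intro nn_integral_mono)
      fix \<tau>
      show "ennreal (indicator \<Omega> y * \<bar>\<phi> y\<bar>) * ennreal (indicator T \<tau> * K y \<tau>)
         \<le> ennreal (indicator \<Omega> y * \<bar>\<phi> y\<bar> powr p / p) * ennreal (indicator T \<tau> * (A \<tau> powr (1/p) * M \<tau>))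
           + ennreal (indicator \<Omega> y * indicator T \<tau> * K y \<tau> * A \<tau> powr (1/p))"
      proof (cases "y \<in> \<Omega> \<and> \<tau> \<in> T")
        case True
        have r: "\<bar>\<phi> y\<bar> * K y \<tau> \<le> \<bar>\<phi> y\<bar> powr p * (A \<tau> powr (1/p) * M \<tau>) / p + K y \<tau> * A \<tau> powr (1/p)"
          using young_kernel_pt[OF p _ A0 K0 Kb] True by auto
        have n1: "0 \<le> \<bar>\<phi> y\<bar> powr p / p" using p by simp
        have n2: "0 \<le> A \<tau> powr (1/p) * M \<tau>" using M0 True by simp
        have n3: "0 \<le> K y \<tau> * A \<tau> powr (1/p)" using K0 by simp
        have "ennreal (\<bar>\<phi> y\<bar>) * ennreal (K y \<tau>) = ennreal (\<bar>\<phi> y\<bar> * K y \<tau>)"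
          using K0[of y \<tau>] by (simp add: ennreal_mult)
        also have "\<dots> \<le> ennreal (\<bar>\<phi> y\<bar> powr p / p * (A \<tau> powr (1/p) * M \<tau>) + K y \<tau> * A \<tau> powr (1/p))"
          using r by (intro ennreal_leI) simp
        also have "\<dots> = ennreal (\<bar>\<phi> y\<bar> powr p / p * (A \<tau> powr (1/p) * M \<tau>)) + ennreal (K y \<tau> * A \<tau> powr (1/p))"
          by (rule ennreal_plus) (use n1 n2 n3 mult_nonneg_nonneg[OF n1 n2] in auto)
        also have "\<dots> = ennreal (\<bar>\<phi> y\<bar> powr p / p) * ennreal (A \<tau> powr (1/p) * M \<tau>) + ennreal (K y \<tau> * A \<tau> powr (1/p))"
          by (subst ennreal_mult) (use n1 n2 in auto)
        finally show ?thesis using True by simp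
      next
        case False
        then show ?thesis by auto
      qed
    qed
    also have "\<dots> = ennreal (indicator \<Omega> y * \<bar>\<phi> y\<bar> powr p / p) * (\<integral>\<^sup>+\<tau>. ennreal (indicator T \<tau> * (A \<tau> powr (1/p) * M \<tau>)) \<partial>lborel) + b y"
      unfolding b_def by (subst nn_integral_add) (auto intro!: nn_integral_cmult)
    also have "\<dots> \<le> ennreal (indicator \<Omega> y * \<bar>\<phi> y\<bar> powr p / p) * ennreal w + b y"
      using W by (intro add_right_mono mult_left_mono) auto
    finally show ?thesis .
  qed
  have "(\<integral>\<^sup>+y. ennreal (indicator \<Omega> y * \<bar>\<phi> y\<bar>) * (\<integral>\<^sup>+\<tau>. ennreal (indicator T \<tau> * K y \<tau>) \<partial>lborel) \<partial>lebesgue)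
     \<le> (\<integral>\<^sup>+y. ennreal (indicator \<Omega> y * \<bar>\<phi> y\<bar> powr p / p) * ennreal w + b y \<partial>lebesgue)"
    by (intro nn_integral_mono pt)
  also have "\<dots> = (\<integral>\<^sup>+y. ennreal (indicator \<Omega> y * \<bar>\<phi> y\<bar> powr p / p) \<partial>lebesgue) * ennreal w + (\<integral>\<^sup>+y. b y \<partial>lebesgue)"
  proof -
    have m1: "(\<lambda>y. ennreal (indicator \<Omega> y * \<bar>\<phi> y\<bar> powr p / p)) \<in> borel_measurable lebesgue"
      using phim by measurable
    have m2: "b \<in> borel_measurable lebesgue" using bm by (rule measurable_completion)
    show ?thesis using m1 m2 by (simp add: nn_integral_add nn_integral_multc)
  qed
  finally have main: "(\<integral>\<^sup>+y. ennreal (indicator \<Omega> y * \<bar>\<phi> y\<bar>) * (\<integral>\<^sup>+\<tau>. ennreal (indicator T \<tau> * K y \<tau>) \<partial>lborel) \<partial>lebesgue) \<le> (\<integral>\<^sup>+y. ennreal (indicator \<Omega> y * \<bar>\<phi> y\<bar> powr p / p) \<partial>lebesgue) * ennreal w + (\<integral>\<^sup>+y. b y \<partial>lebesgue)" .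
  have "(\<integral>\<^sup>+y. b y \<partial>lebesgue) = (\<integral>\<^sup>+y. b y \<partial>lborel)"
    by (rule nn_integral_completion)
  also have "\<dots> = (\<integral>\<^sup>+\<tau>. (\<integral>\<^sup>+y. ennreal (indicator \<Omega> y * indicator T \<tau> * K y \<tau> * A \<tau> powr (1/p)) \<partial>lborel) \<partial>lborel)"
    unfolding b_def by (rule lborel_pair.Fubini'[symmetric]) measurable
  also have "\<dots> = (\<integral>\<^sup>+\<tau>. ennreal (indicator T \<tau> * A \<tau> powr (1/p)) * (\<integral>\<^sup>+y. ennreal (indicator \<Omega> y * K y \<tau>) \<partial>lborel) \<partial>lborel)"
  proof (intro nn_integral_cong)
    fix \<tau> :: real
    have "(\<integral>\<^sup>+y. ennreal (indicator \<Omega> y * indicator T \<tau> * K y \<tau> * A \<tau> powr (1/p)) \<partial>lborel)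
        = (\<integral>\<^sup>+y. ennreal (indicator T \<tau> * A \<tau> powr (1/p)) * ennreal (indicator \<Omega> y * K y \<tau>) \<partial>lborel)"
    proof (intro nn_integral_cong)
      fix y
      have n: "0 \<le> indicator \<Omega> y * K y \<tau>" "0 \<le> indicator T \<tau> * A \<tau> powr (1/p)" using K0 by auto
      have e: "indicator \<Omega> y * indicator T \<tau> * K y \<tau> * A \<tau> powr (1/p) = (indicator T \<tau> * A \<tau> powr (1/p)) * (indicator \<Omega> y * K y \<tau>)"
        by (simp only: mult_ac)
      show "ennreal (indicator \<Omega> y * indicator T \<tau> * K y \<tau> * A \<tau> powr (1/p))
          = ennreal (indicator T \<tau> * A \<tau> powr (1/p)) * ennreal (indicator \<Omega> y * K y \<tau>)"
        unfolding e by (rule ennreal_mult[OF n(2) n(1)])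
    qed
    also have "\<dots> = ennreal (indicator T \<tau> * A \<tau> powr (1/p)) * (\<integral>\<^sup>+y. ennreal (indicator \<Omega> y * K y \<tau>) \<partial>lborel)"
    proof (rule nn_integral_cmult)
      have "(\<lambda>y. K y \<tau>) \<in> borel_measurable lborel"
        using measurable_Pair1[OF Kpm, of \<tau>] by simp
      then show "(\<lambda>y. ennreal (indicator \<Omega> y * K y \<tau>)) \<in> borel_measurable lborel" by measurable
    qed
    finally show "(\<integral>\<^sup>+y. ennreal (indicator \<Omega> y * indicator T \<tau> * K y \<tau> * A \<tau> powr (1/p)) \<partial>lborel)
        = ennreal (indicator T \<tau> * A \<tau> powr (1/p)) * (\<integral>\<^sup>+y. ennreal (indicator \<Omega> y * K y \<tau>) \<partial>lborel)" .
  qed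
  also have "\<dots> \<le> (\<integral>\<^sup>+\<tau>. ennreal (indicator T \<tau> * (A \<tau> powr (1/p) * M \<tau>)) \<partial>lborel)"
  proof (intro nn_integral_mono)
    fix \<tau> :: real
    show "ennreal (indicator T \<tau> * A \<tau> powr (1/p)) * (\<integral>\<^sup>+y. ennreal (indicator \<Omega> y * K y \<tau>) \<partial>lborel)
        \<le> ennreal (indicator T \<tau> * (A \<tau> powr (1/p) * M \<tau>))"
    proof (cases "\<tau> \<in> T")
      case True
      then have "ennreal (A \<tau> powr (1/p)) * (\<integral>\<^sup>+y. ennreal (indicator \<Omega> y * K y \<tau>) \<partial>lborel)
          \<le> ennreal (A \<tau> powr (1/p)) * ennreal (M \<tau>)"
        using Mb by (intro mult_left_mono) auto
      then show ?thesis using True M0[OF True] by (simp add: ennreal_mult)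
    qed simp
  qed
  also have "\<dots> \<le> ennreal w" by (rule W)
  finally have bw: "(\<integral>\<^sup>+y. b y \<partial>lebesgue) \<le> ennreal w" .
  have "(\<integral>\<^sup>+y. ennreal (indicator \<Omega> y * \<bar>\<phi> y\<bar> powr p / p) \<partial>lebesgue)
      = (\<integral>\<^sup>+y. ennreal (indicator \<Omega> y * \<bar>\<phi> y\<bar> powr p) * ennreal (1 / p) \<partial>lebesgue)"
    using p by (intro nn_integral_cong) (simp add: ennreal_mult[symmetric])
  also have "\<dots> = (\<integral>\<^sup>+y. ennreal (indicator \<Omega> y * \<bar>\<phi> y\<bar> powr p) \<partial>lebesgue) * ennreal (1 / p)"
    by (intro nn_integral_multc measurable_compose[OF phim]) measurable
  also have "\<dots> \<le> ennreal \<Phi> * ennreal (1 / p)"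
    using Phi by (intro mult_right_mono) auto
  finally have pw: "(\<integral>\<^sup>+y. ennreal (indicator \<Omega> y * \<bar>\<phi> y\<bar> powr p / p) \<partial>lebesgue) \<le> ennreal (\<Phi> / p)"
    using p Phi0 by (simp add: ennreal_mult divide_inverse)
  have "(\<integral>\<^sup>+y. ennreal (indicator \<Omega> y * \<bar>\<phi> y\<bar>) * (\<integral>\<^sup>+\<tau>. ennreal (indicator T \<tau> * K y \<tau>) \<partial>lborel) \<partial>lebesgue)
     \<le> ennreal (\<Phi> / p) * ennreal w + ennreal w"
    using main pw bw by (meson add_mono mult_right_mono order_trans zero_le)
  also have "\<dots> = ennreal ((\<Phi> / p + 1) * w)"
  proof -
    have "ennreal (\<Phi> / p) * ennreal w = ennreal (\<Phi> / p * w)" using p Phi0 w0 by (subst ennreal_mult) auto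
    moreover have e: "(\<Phi> / p + 1) * w = \<Phi> / p * w + w" by (simp add: algebra_simps)
    moreover have "0 \<le> \<Phi> / p * w" using p Phi0 w0 by simp
    ultimately show ?thesis using w0 by (simp only: e ennreal_plus)
  qed
  finally show ?thesis .
qed

lemma heat_nonneg: "0 \<le> heat x t"
  by (simp add: heat_def)

lemma heat_minus_commute: "heat (a - b) t = heat (b - a) t"
  by (simp add: heat_def norm_minus_commute)

lemma heat_mono_norm: "t > 0 \<Longrightarrow> norm x \<le> norm y \<Longrightarrow> heat y t \<le> heat x t"
  for x y :: "'b::euclidean_space"
  unfolding heat_def
  by (intro mult_left_mono) (auto intro!: divide_right_mono power_mono)

lemma heat_refl_le:
  fixes x y :: "'a::euclidean_space \<times> real"
  assumes "snd x \<ge> 0" "snd y \<ge> 0" "t > 0"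
  shows "heat (x - reflN y) t \<le> heat (x - y) t"
proof (rule heat_mono_norm[OF assms(3)])
  have "\<bar>snd x - snd y\<bar> \<le> \<bar>snd x + snd y\<bar>" using assms by auto
  then have "(snd x - snd y)^2 \<le> (snd x + snd y)^2"
    by (metis abs_le_square_iff)
  then show "norm (x - y) \<le> norm (x - reflN y)"
    unfolding reflN_def by (cases x, cases y) (simp add: norm_Pair)
qed

definition D1 :: "real \<Rightarrow> real \<Rightarrow> real" where
  "D1 \<xi> t = sqrt 2 * t powr (-1/2) * heat \<xi> (2 * t)"

lemma D1_nonneg: "t > 0 \<Longrightarrow> 0 \<le> D1 \<xi> t"
  by (simp add: D1_def heat_nonneg)

lemma D1_eq: "t > 0 \<Longrightarrow> D1 \<xi> t = t powr (-1/2) * (4 * pi * t) powr (-1/2) * exp (- (\<xi>^2) / (8 * t))"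
proof -
  assume t: "t > 0"
  have "(4 * pi * (2 * t)) powr (-1/2) = 2 powr (-1/2) * (4 * pi * t) powr (-1/2)"
    using t by (subst powr_mult[symmetric]) (auto simp: mult_ac)
  moreover have "sqrt 2 * 2 powr (-1/2) = 1"
    by (simp add: powr_half_sqrt[symmetric] powr_add[symmetric])
  ultimately have "sqrt 2 * (4 * pi * (2 * t)) powr (-1/2) = (4 * pi * t) powr (-1/2)"
    by (metis mult.assoc mult_1)
  then show ?thesis
    unfolding D1_def heat_real by (simp add: field_simps)
qed

lemma dheat1_le:
  assumes t: "t > 0"
  shows "\<bar>dheat1 \<xi> t\<bar> \<le> D1 \<xi> t"
proof -
  define u where "u = \<bar>\<xi>\<bar> / (2 * sqrt t)"
  define E where "E = exp (- (\<xi>^2) / (8 * t))"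
  have u0: "u \<ge> 0" using t by (simp add: u_def)
  have st: "sqrt t * sqrt t = t" using t by simp
  have uu: "u^2 / 2 = \<xi>^2 / (8 * t)"
    unfolding u_def power_divide power_mult_distrib using t by (simp add: power2_eq_square)
  have "u \<le> 1 + u^2 / 2"
  proof -
    have "0 \<le> (u - 1)^2 + 1" by simp
    then show ?thesis by (simp add: power2_eq_square algebra_simps)
  qed
  also have "\<dots> \<le> exp (u^2 / 2)" by (rule exp_ge_add_one_self)
  finally have "u \<le> exp (\<xi>^2 / (8 * t))" using uu by simp
  then have ue: "u * E \<le> 1"
  proof -
    have "E = inverse (exp (\<xi>^2 / (8 * t)))" unfolding E_def by (simp add: exp_minus[symmetric])
    then have "exp (\<xi>^2 / (8 * t)) * E = 1" by simp
    moreover have "u * E \<le> exp (\<xi>^2 / (8 * t)) * E"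
      using \<open>u \<le> exp (\<xi>^2 / (8 * t))\<close> by (rule mult_right_mono) (simp add: E_def)
    ultimately show ?thesis by simp
  qed
  have e2: "exp (- (\<xi>^2) / (4 * t)) = E * E"
    unfolding E_def by (simp add: exp_add[symmetric])
  have tp: "t powr (-1/2) = 1 / sqrt t"
    using t by (simp add: powr_minus_divide powr_half_sqrt)
  have a: "\<bar>\<xi>\<bar> / (2 * t) = u * t powr (-1/2)"
    unfolding tp u_def using st by (metis divide_divide_eq_left times_divide_eq_right mult.commute mult_1)
  have "\<bar>dheat1 \<xi> t\<bar> = \<bar>\<xi>\<bar> / (2 * t) * ((4 * pi * t) powr (-1/2) * exp (- (\<xi>^2) / (4 * t)))"
    using t by (simp add: dheat1_eq heat_real abs_mult)
  also have "\<dots> = (u * E) * (t powr (-1/2) * (4 * pi * t) powr (-1/2) * E)"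
    unfolding a e2 by (simp only: mult_ac)
  also have "\<dots> \<le> 1 * (t powr (-1/2) * (4 * pi * t) powr (-1/2) * E)"
    by (intro mult_right_mono ue) (simp add: E_def)
  finally show ?thesis using t by (simp add: D1_eq E_def)
qed

lemma heat_shift1:
  assumes "a \<ge> 0" "y \<ge> 0" "t > 0"
  shows "heat (a + y :: real) t \<le> exp (- (a^2) / (4 * t)) * heat y t"
proof -
  have "- ((a + y)^2) / (4 * t) \<le> - (a^2) / (4 * t) + - (y^2) / (4 * t)"
    using assms by (simp add: divide_right_mono power2_eq_square field_simps)
  then have "exp (- ((a + y)^2) / (4 * t)) \<le> exp (- (a^2) / (4 * t)) * exp (- (y^2) / (4 * t))"
    by (simp add: exp_add[symmetric])
  then have "(4 * pi * t) powr (-1/2) * exp (- ((a + y)^2) / (4 * t)) \<le> (4 * pi * t) powr (-1/2) * (exp (- (a^2) / (4 * t)) * exp (- (y^2) / (4 * t)))"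
    by (rule mult_left_mono) simp
  then show ?thesis unfolding heat_real by (simp only: mult_ac)
qed

lemma heat_integral_sym:
  fixes x0 :: "'b::euclidean_space"
  shows "t > 0 \<Longrightarrow> (\<integral>\<^sup>+y. ennreal (heat (x0 - y) t) \<partial>lborel) = 1"
  by (subst heat_minus_commute) (rule heat_integral)

lemma Omega_iff: "y \<in> Omega \<longleftrightarrow> snd y > 0"
  by (cases y) (simp add: Omega_def)

lemma Omega_sets[measurable]: "(Omega :: ('a::euclidean_space \<times> real) set) \<in> sets borel"
  unfolding Omega_def by (intro borel_Times) auto

lemma D1_measurable[measurable]:
  assumes [measurable]: "f \<in> borel_measurable M" "g \<in> borel_measurable M"
  shows "(\<lambda>x. D1 (f x) (g x)) \<in> borel_measurable M"
  unfolding D1_def by measurable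

lemma nn_integral_pair_split:
  fixes f :: "'a::euclidean_space \<times> 'b::euclidean_space \<Rightarrow> ennreal"
  assumes "f \<in> borel_measurable (lborel \<Otimes>\<^sub>M lborel)"
  shows "(\<integral>\<^sup>+y. f y \<partial>lborel) = (\<integral>\<^sup>+y1. (\<integral>\<^sup>+y2. f (y1, y2) \<partial>lborel) \<partial>lborel)"
proof -
  have "(\<integral>\<^sup>+y. f y \<partial>lborel) = (\<integral>\<^sup>+y. f y \<partial>(lborel \<Otimes>\<^sub>M lborel))"
    by (simp add: lborel_prod)
  also have "\<dots> = (\<integral>\<^sup>+y1. (\<integral>\<^sup>+y2. f (y1, y2) \<partial>lborel) \<partial>lborel)"
    by (rule lborel.nn_integral_fst[symmetric]) (rule assms)
  finally show ?thesis .
qed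

lemma kernel_M:
  fixes x :: "'a::euclidean_space \<times> real"
  assumes x: "snd x \<ge> 0" and \<sigma>: "\<sigma> > 0" and s: "s > 0" and \<tau>: "\<tau> \<ge> 0"
  shows "(\<integral>\<^sup>+y. ennreal (indicator Omega y * (heat (fst x - fst y) s * D1 (snd x + snd y + \<tau>) \<sigma>)) \<partial>lborel)
         \<le> ennreal (sqrt 2 * \<sigma> powr (-1/2) * exp (- ((snd x + \<tau>)^2) / (8 * \<sigma>)))"
    (is "_ \<le> ennreal ?M")
proof -
  have M0: "0 \<le> ?M" by simp
  have "(\<integral>\<^sup>+y. ennreal (indicator Omega y * (heat (fst x - fst y) s * D1 (snd x + snd y + \<tau>) \<sigma>)) \<partial>lborel)
      \<le> (\<integral>\<^sup>+y. ennreal (heat (fst x - fst y) s) * (ennreal ?M * ennreal (heat (snd y :: real) (2 * \<sigma>))) \<partial>lborel)"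
  proof (intro nn_integral_mono)
    fix y :: "'a \<times> real"
    show "ennreal (indicator Omega y * (heat (fst x - fst y) s * D1 (snd x + snd y + \<tau>) \<sigma>))
        \<le> ennreal (heat (fst x - fst y) s) * (ennreal ?M * ennreal (heat (snd y :: real) (2 * \<sigma>)))"
    proof (cases "y \<in> Omega")
      case True
      then have y: "snd y > 0" by (simp add: Omega_iff)
      have "D1 (snd x + snd y + \<tau>) \<sigma> = sqrt 2 * \<sigma> powr (-1/2) * heat ((snd x + \<tau>) + snd y) (2 * \<sigma>)"
        by (simp add: D1_def add_ac)
      also have "\<dots> \<le> sqrt 2 * \<sigma> powr (-1/2) * (exp (- ((snd x + \<tau>)^2) / (4 * (2 * \<sigma>))) * heat (snd y) (2 * \<sigma>))"
        using x y \<tau> \<sigma> by (intro mult_left_mono heat_shift1) auto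
      also have "\<dots> = ?M * heat (snd y) (2 * \<sigma>)" by (simp add: mult_ac)
      finally have "heat (fst x - fst y) s * D1 (snd x + snd y + \<tau>) \<sigma> \<le> heat (fst x - fst y) s * (?M * heat (snd y) (2 * \<sigma>))"
        by (intro mult_left_mono heat_nonneg)
      then show ?thesis using True
        by (simp add: ennreal_mult[symmetric] heat_nonneg ennreal_leI del: ennreal_mult)
    qed simp
  qed
  also have "\<dots> = (\<integral>\<^sup>+y1. (\<integral>\<^sup>+y2. ennreal (heat (fst x - y1) s) * (ennreal ?M * ennreal (heat (y2::real) (2 * \<sigma>))) \<partial>lborel) \<partial>lborel)"
  proof -
    have "(\<lambda>y. ennreal (heat (fst x - fst y) s) * (ennreal ?M * ennreal (heat (snd y :: real) (2 * \<sigma>)))) \<in> borel_measurable (lborel \<Otimes>\<^sub>M lborel)"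
      by measurable
    from nn_integral_pair_split[OF this] show ?thesis by simp
  qed
  also have "\<dots> = (\<integral>\<^sup>+y1. ennreal (heat (fst x - y1) s) * (ennreal ?M * (\<integral>\<^sup>+y2. ennreal (heat (y2::real) (2 * \<sigma>)) \<partial>lborel)) \<partial>lborel)"
    by (simp add: nn_integral_cmult)
  also have "(\<integral>\<^sup>+y2. ennreal (heat (y2::real) (2 * \<sigma>)) \<partial>lborel) = 1"
    using heat_integral[of "2 * \<sigma>" "0::real"] \<sigma> by simp
  also have "(\<integral>\<^sup>+y1. ennreal (heat (fst x - y1) s) * (ennreal ?M * 1) \<partial>lborel) = ennreal ?M * (\<integral>\<^sup>+y1. ennreal (heat (fst x - y1) s) \<partial>lborel)"
  proof -
    have "(\<integral>\<^sup>+y1. ennreal (heat (fst x - y1) s) * (ennreal ?M * 1) \<partial>lborel) = (\<integral>\<^sup>+y1. ennreal ?M * ennreal (heat (fst x - y1) s) \<partial>lborel)"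
      by (simp add: mult.commute)
    also have "\<dots> = ennreal ?M * (\<integral>\<^sup>+y1. ennreal (heat (fst x - y1) s) \<partial>lborel)"
      by (rule nn_integral_cmult) measurable
    finally show ?thesis .
  qed
  also have "\<dots> = ennreal ?M" using heat_integral_sym[OF s, of "fst x"] by simp
  finally show ?thesis .
qed

lemma abs_integral_le_nn:
  fixes f :: "'b \<Rightarrow> real"
  shows "ennreal \<bar>integral\<^sup>L M f\<bar> \<le> (\<integral>\<^sup>+x. ennreal \<bar>f x\<bar> \<partial>M)"
proof (cases "integrable M f")
  case True
  then show ?thesis using integral_norm_bound_ennreal[OF True] by simp
next
  case False
  then show ?thesis by (simp add: not_integrable_integral_eq)
qed

definition Lk :: "real \<Rightarrow> real \<Rightarrow> 'a::euclidean_space \<times> real \<Rightarrow> 'a \<times> real \<Rightarrow> real \<Rightarrow> real" where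
  "Lk \<epsilon> k x y t = (LBINT \<tau>:{0<..}. heat (fst x - fst y) (t / \<epsilon> + k * \<tau>)
                              * dheat1 (snd x + snd y + \<tau>) (t / \<epsilon>))"

lemma Psi_Lk: "Psi \<epsilon> k x y t = G0 x y (t / \<epsilon>) - 2 * Lk \<epsilon> k x y t"
  by (simp add: Psi_def Lk_def)

lemma Lk_bound:
  assumes "t / \<epsilon> > 0"
  shows "ennreal \<bar>Lk \<epsilon> k x y t\<bar> \<le> (\<integral>\<^sup>+\<tau>. ennreal (indicator {0<..} \<tau> * (heat (fst x - fst y) (t / \<epsilon> + k * \<tau>) * D1 (snd x + snd y + \<tau>) (t / \<epsilon>))) \<partial>lborel)"
proof -
  have "ennreal \<bar>Lk \<epsilon> k x y t\<bar> \<le> (\<integral>\<^sup>+\<tau>. ennreal \<bar>indicator {0<..} \<tau> *\<^sub>R (heat (fst x - fst y) (t / \<epsilon> + k * \<tau>) * dheat1 (snd x + snd y + \<tau>) (t / \<epsilon>))\<bar> \<partial>lborel)"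
    unfolding Lk_def set_lebesgue_integral_def by (rule abs_integral_le_nn)
  also have "\<dots> \<le> (\<integral>\<^sup>+\<tau>. ennreal (indicator {0<..} \<tau> * (heat (fst x - fst y) (t / \<epsilon> + k * \<tau>) * D1 (snd x + snd y + \<tau>) (t / \<epsilon>))) \<partial>lborel)"
  proof (intro nn_integral_mono ennreal_leI)
    fix \<tau> :: real
    have "\<bar>dheat1 (snd x + snd y + \<tau>) (t / \<epsilon>)\<bar> \<le> D1 (snd x + snd y + \<tau>) (t / \<epsilon>)"
      using assms by (rule dheat1_le)
    then have "heat (fst x - fst y) (t / \<epsilon> + k * \<tau>) * \<bar>dheat1 (snd x + snd y + \<tau>) (t / \<epsilon>)\<bar> \<le> heat (fst x - fst y) (t / \<epsilon> + k * \<tau>) * D1 (snd x + snd y + \<tau>) (t / \<epsilon>)"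
      by (intro mult_left_mono heat_nonneg)
    then show "\<bar>indicator {0<..} \<tau> *\<^sub>R (heat (fst x - fst y) (t / \<epsilon> + k * \<tau>) * dheat1 (snd x + snd y + \<tau>) (t / \<epsilon>))\<bar>
        \<le> indicator {0<..} \<tau> * (heat (fst x - fst y) (t / \<epsilon> + k * \<tau>) * D1 (snd x + snd y + \<tau>) (t / \<epsilon>))"
      by (simp add: abs_mult heat_nonneg split: split_indicator)
  qed
  finally show ?thesis .
qed

lemma young_kernel0:
  fixes \<phi> :: "'c::euclidean_space \<Rightarrow> real" and K :: "'c \<Rightarrow> real"
  assumes p: "1 \<le> p"
    and phim: "(\<lambda>y. indicator \<Omega> y * \<bar>\<phi> y\<bar> powr p) \<in> borel_measurable lebesgue"
    and Phi: "(\<integral>\<^sup>+y. ennreal (indicator \<Omega> y * \<bar>\<phi> y\<bar> powr p) \<partial>lebesgue) \<le> ennreal \<Phi>"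
    and [measurable]: "\<Omega> \<in> sets borel" "K \<in> borel_measurable borel"
    and K0: "\<And>y. 0 \<le> K y"
    and Kb: "\<And>y. y \<in> \<Omega> \<Longrightarrow> K y \<le> A * M"
    and Mb: "(\<integral>\<^sup>+y. ennreal (indicator \<Omega> y * K y) \<partial>lborel) \<le> ennreal M"
    and A0: "0 < A" and M0: "0 \<le> M" and Phi0: "0 \<le> \<Phi>"
  shows "(\<integral>\<^sup>+y. ennreal (indicator \<Omega> y * \<bar>\<phi> y\<bar>) * ennreal (K y) \<partial>lebesgue)
          \<le> ennreal ((\<Phi> / p + 1) * (A powr (1/p) * M))"
proof -
  have I: "(\<integral>\<^sup>+\<tau>. ennreal (indicator {0..1::real} \<tau> * c) \<partial>lborel) = ennreal c" if "0 \<le> c" for c :: real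
  proof -
    have "(\<integral>\<^sup>+\<tau>. ennreal (indicator {0..1::real} \<tau> * c) \<partial>lborel) = (\<integral>\<^sup>+\<tau>. ennreal c * indicator {0..1::real} \<tau> \<partial>lborel)"
      by (intro nn_integral_cong) (simp split: split_indicator)
    also have "\<dots> = ennreal c" by (simp add: nn_integral_cmult_indicator)
    finally show ?thesis .
  qed
  have "(\<lambda>z. K (fst z)) \<in> borel_measurable (borel \<Otimes>\<^sub>M (borel :: real measure))" by measurable
  then have Km: "(\<lambda>(y, \<tau>::real). K y) \<in> borel_measurable borel"
    unfolding borel_prod by (simp add: case_prod_beta')
  have "(\<integral>\<^sup>+y. ennreal (indicator \<Omega> y * \<bar>\<phi> y\<bar>) * (\<integral>\<^sup>+\<tau>. ennreal (indicator {0..1::real} \<tau> * K y) \<partial>lborel) \<partial>lebesgue)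
          \<le> ennreal ((\<Phi> / p + 1) * (A powr (1/p) * M))"
    by (rule young_kernel[where K="\<lambda>y \<tau>. K y" and A="\<lambda>_. A" and M="\<lambda>_. M" and T="{0..1::real}"])
       (use assms I Km in \<open>auto simp: A0\<close>)
  then show ?thesis using K0 I by simp
qed

lemma heat_2s: "heat (\<tau>::real) (2 * \<sigma>) = (8 * pi * \<sigma>) powr (-1/2) * exp (- (\<tau>^2) / (8 * \<sigma>))"
proof -
  have "4 * pi * (2 * \<sigma>) = 8 * pi * \<sigma>" "4 * (2 * \<sigma>) = 8 * \<sigma>" by simp_all
  then show ?thesis unfolding heat_real by metis
qed

lemma exp_as_heat:
  assumes "\<sigma> > 0"
  shows "exp (- (\<tau>^2) / (8 * \<sigma>)) = (8 * pi * \<sigma>) powr (1/2) * heat (\<tau>::real) (2 * \<sigma>)"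
proof -
  have "(8 * pi * \<sigma>) powr (1/2) * (8 * pi * \<sigma>) powr (-1/2) = 1"
    using assms by (simp add: powr_add[symmetric])
  then show ?thesis unfolding heat_2s by (metis mult.assoc mult_1)
qed

lemma W1_bound:
  fixes D :: real
  assumes \<sigma>: "\<sigma> > 0" and k: "k \<ge> 0" and p: "p \<ge> 1" and xN: "xN \<ge> 0" and D: "D \<ge> 0"
  shows "(\<integral>\<^sup>+\<tau>. ennreal (indicator {0<..} \<tau> *
            (((4 * pi * (\<sigma> + k * \<tau>)) powr (- D / 2) * (8 * pi * \<sigma>) powr (-1/2)) powr (1/p)
             * (sqrt 2 * \<sigma> powr (-1/2) * exp (- ((xN + \<tau>)^2) / (8 * \<sigma>))))) \<partial>lborel)
         \<le> ennreal (((4 * pi * \<sigma>) powr (- D / 2) * (8 * pi * \<sigma>) powr (-1/2)) powr (1/p)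
                    * (sqrt 2 * \<sigma> powr (-1/2) * (8 * pi * \<sigma>) powr (1/2)))"
    (is "_ \<le> ennreal (?a0 * ?c)")
proof -
  have "(\<integral>\<^sup>+\<tau>. ennreal (indicator {0<..} \<tau> *
            (((4 * pi * (\<sigma> + k * \<tau>)) powr (- D / 2) * (8 * pi * \<sigma>) powr (-1/2)) powr (1/p)
             * (sqrt 2 * \<sigma> powr (-1/2) * exp (- ((xN + \<tau>)^2) / (8 * \<sigma>))))) \<partial>lborel)
      \<le> (\<integral>\<^sup>+\<tau>. ennreal (?a0 * ?c) * ennreal (heat (\<tau>::real) (2 * \<sigma>)) \<partial>lborel)"
  proof (intro nn_integral_mono)
    fix \<tau> :: real
    show "ennreal (indicator {0<..} \<tau> *
            (((4 * pi * (\<sigma> + k * \<tau>)) powr (- D / 2) * (8 * pi * \<sigma>) powr (-1/2)) powr (1/p)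
             * (sqrt 2 * \<sigma> powr (-1/2) * exp (- ((xN + \<tau>)^2) / (8 * \<sigma>)))))
        \<le> ennreal (?a0 * ?c) * ennreal (heat \<tau> (2 * \<sigma>))"
    proof (cases "\<tau> > 0")
      case True
      have "(4 * pi * (\<sigma> + k * \<tau>)) powr (- D / 2) \<le> (4 * pi * \<sigma>) powr (- D / 2)"
        using True \<sigma> k D by (intro powr_mono2') auto
      then have "(4 * pi * (\<sigma> + k * \<tau>)) powr (- D / 2) * (8 * pi * \<sigma>) powr (-1/2) \<le> (4 * pi * \<sigma>) powr (- D / 2) * (8 * pi * \<sigma>) powr (-1/2)"
        by (rule mult_right_mono) simp
      then have a: "((4 * pi * (\<sigma> + k * \<tau>)) powr (- D / 2) * (8 * pi * \<sigma>) powr (-1/2)) powr (1/p) \<le> ?a0"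
        using p by (intro powr_mono2) auto
      have "exp (- ((xN + \<tau>)^2) / (8 * \<sigma>)) \<le> exp (- (\<tau>^2) / (8 * \<sigma>))"
        using True xN \<sigma> by (simp add: divide_right_mono power_mono)
      also have "\<dots> = (8 * pi * \<sigma>) powr (1/2) * heat \<tau> (2 * \<sigma>)" by (rule exp_as_heat[OF \<sigma>])
      finally have b: "sqrt 2 * \<sigma> powr (-1/2) * exp (- ((xN + \<tau>)^2) / (8 * \<sigma>)) \<le> ?c * heat \<tau> (2 * \<sigma>)"
        by (simp add: mult_left_mono mult.assoc)
      have "((4 * pi * (\<sigma> + k * \<tau>)) powr (- D / 2) * (8 * pi * \<sigma>) powr (-1/2)) powr (1/p)
             * (sqrt 2 * \<sigma> powr (-1/2) * exp (- ((xN + \<tau>)^2) / (8 * \<sigma>))) \<le> ?a0 * (?c * heat \<tau> (2 * \<sigma>))"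
        by (intro mult_mono a b) auto
      then show ?thesis using True
        by (simp add: ennreal_mult[symmetric] heat_nonneg mult.assoc del: ennreal_mult)
    qed simp
  qed
  also have "\<dots> = ennreal (?a0 * ?c) * (\<integral>\<^sup>+\<tau>. ennreal (heat (\<tau>::real) (2 * \<sigma>)) \<partial>lborel)"
    by (rule nn_integral_cmult) measurable
  also have "\<dots> = ennreal (?a0 * ?c)"
    using heat_integral[of "2 * \<sigma>" "0::real"] \<sigma> by simp
  finally show ?thesis .
qed

lemma fst_borel_raw[measurable (raw)]:
  fixes f :: "'c \<Rightarrow> 'a::second_countable_topology \<times> 'b::second_countable_topology"
  assumes "f \<in> M \<rightarrow>\<^sub>M borel"
  shows "(\<lambda>x. fst (f x)) \<in> M \<rightarrow>\<^sub>M borel"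
proof -
  have "fst \<in> (borel :: ('a \<times> 'b) measure) \<rightarrow>\<^sub>M borel"
    by (intro borel_measurable_continuous_onI continuous_intros)
  from measurable_compose[OF assms this] show ?thesis .
qed

lemma snd_borel_raw[measurable (raw)]:
  fixes f :: "'c \<Rightarrow> 'a::second_countable_topology \<times> 'b::second_countable_topology"
  assumes "f \<in> M \<rightarrow>\<^sub>M borel"
  shows "(\<lambda>x. snd (f x)) \<in> M \<rightarrow>\<^sub>M borel"
proof -
  have "snd \<in> (borel :: ('a \<times> 'b) measure) \<rightarrow>\<^sub>M borel"
    by (intro borel_measurable_continuous_onI continuous_intros)
  from measurable_compose[OF assms this] show ?thesis .
qed

lemma test_meas:
  fixes x :: "'a::euclidean_space \<times> real"
  shows "(\<lambda>(y, \<tau>::real). heat (fst x - fst y) (\<sigma> + k * \<tau>) * D1 (snd x + snd y + \<tau>) \<sigma>) \<in> borel_measurable borel"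
  unfolding case_prod_beta' by measurable

lemma DIM_pair_real: "DIM('a::euclidean_space \<times> real) = DIM('a) + 1"
  by simp

lemma GN_le:
  fixes x y :: "'a::euclidean_space \<times> real"
  assumes "snd x \<ge> 0" "snd y \<ge> 0" "s > 0"
  shows "\<bar>GN x y s\<bar> \<le> 2 * heat (x - y) s"
  using heat_refl_le[OF assms] heat_nonneg[of "x - y" s] heat_nonneg[of "x - reflN y" s]
  by (simp add: GN_def)

lemma G0_le:
  fixes x y :: "'a::euclidean_space \<times> real"
  assumes "snd x \<ge> 0" "snd y \<ge> 0" "s > 0"
  shows "\<bar>G0 x y s\<bar> \<le> heat (x - y) s"
  using heat_refl_le[OF assms] heat_nonneg[of "x - y" s] heat_nonneg[of "x - reflN y" s]
  by (simp add: G0_def)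

lemma heat_kernel_young:
  fixes \<phi> :: "'a::euclidean_space \<times> real \<Rightarrow> real" and x :: "'a \<times> real"
  assumes p: "1 \<le> p"
    and phim: "(\<lambda>y. indicator Omega y * \<bar>\<phi> y\<bar> powr p) \<in> borel_measurable lebesgue"
    and Phi: "(\<integral>\<^sup>+y. ennreal (indicator Omega y * \<bar>\<phi> y\<bar> powr p) \<partial>lebesgue) \<le> ennreal \<Phi>"
    and Phi0: "0 \<le> \<Phi>" and s: "s > 0" and c: "c > 0"
  shows "(\<integral>\<^sup>+y. ennreal (indicator Omega y * \<bar>\<phi> y\<bar>) * ennreal (c * heat (x - y) s) \<partial>lebesgue)
          \<le> ennreal ((\<Phi> / p + 1) * (((4 * pi * s) powr (- real DIM('a \<times> real) / 2)) powr (1/p) * c))"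
proof (rule young_kernel0[OF p phim Phi])
  show "(\<lambda>y. c * heat (x - y) s) \<in> borel_measurable borel" by measurable
  show "c * heat (x - y) s \<le> (4 * pi * s) powr (- real DIM('a \<times> real) / 2) * c" for y
    using heat_le[OF s, of "x - y"] c by (simp add: mult.commute)
  have "(\<integral>\<^sup>+y. ennreal (indicator Omega y * (c * heat (x - y) s)) \<partial>lborel) \<le> (\<integral>\<^sup>+y. ennreal c * ennreal (heat (x - y) s) \<partial>lborel)"
    using c by (intro nn_integral_mono) (auto simp: ennreal_mult[symmetric] heat_nonneg split: split_indicator simp del: ennreal_mult)
  also have "\<dots> = ennreal c * (\<integral>\<^sup>+y. ennreal (heat (x - y) s) \<partial>lborel)"
    by (rule nn_integral_cmult) measurable
  also have "\<dots> = ennreal c" using heat_integral_sym[OF s, of x] by simp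
  finally show "(\<integral>\<^sup>+y. ennreal (indicator Omega y * (c * heat (x - y) s)) \<partial>lborel) \<le> ennreal c" .
qed (use c s Phi0 in \<open>auto simp: heat_nonneg\<close>)

lemma tau_kernel_young:
  fixes \<phi> :: "'a::euclidean_space \<times> real \<Rightarrow> real" and x :: "'a \<times> real"
  assumes p: "1 \<le> p"
    and phim: "(\<lambda>y. indicator Omega y * \<bar>\<phi> y\<bar> powr p) \<in> borel_measurable lebesgue"
    and Phi: "(\<integral>\<^sup>+y. ennreal (indicator Omega y * \<bar>\<phi> y\<bar> powr p) \<partial>lebesgue) \<le> ennreal \<Phi>"
    and Phi0: "0 \<le> \<Phi>" and \<sigma>: "\<sigma> > 0" and k: "k \<ge> 0" and x: "snd x \<ge> 0"
    and W: "(\<integral>\<^sup>+\<tau>. ennreal (indicator {0<..} \<tau> *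
            (((4 * pi * (\<sigma> + k * \<tau>)) powr (- real DIM('a) / 2) * (8 * pi * \<sigma>) powr (-1/2)) powr (1/p)
             * (sqrt 2 * \<sigma> powr (-1/2) * exp (- ((snd x + \<tau>)^2) / (8 * \<sigma>))))) \<partial>lborel) \<le> ennreal w"
    and w0: "0 \<le> w"
  shows "(\<integral>\<^sup>+y. ennreal (indicator Omega y * \<bar>\<phi> y\<bar>) *
            (\<integral>\<^sup>+\<tau>. ennreal (indicator {0<..} \<tau> * (heat (fst x - fst y) (\<sigma> + k * \<tau>) * D1 (snd x + snd y + \<tau>) \<sigma>)) \<partial>lborel) \<partial>lebesgue)
          \<le> ennreal ((\<Phi> / p + 1) * w)"
proof (rule young_kernel[OF p phim Phi _ _ _ _ _ _ _ _ _ _ W w0 Phi0])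
  show "(\<lambda>(y, \<tau>). heat (fst x - fst y) (\<sigma> + k * \<tau>) * D1 (snd x + snd y + \<tau>) \<sigma>) \<in> borel_measurable borel"
    by (rule test_meas)
  show "(\<lambda>\<tau>. (4 * pi * (\<sigma> + k * \<tau>)) powr (- real DIM('a) / 2) * (8 * pi * \<sigma>) powr (-1/2)) \<in> borel_measurable borel"
    by measurable
  show "(\<lambda>\<tau>. sqrt 2 * \<sigma> powr (-1/2) * exp (- ((snd x + \<tau>)^2) / (8 * \<sigma>))) \<in> borel_measurable borel"
    by measurable
  show "0 \<le> heat (fst x - fst y) (\<sigma> + k * \<tau>) * D1 (snd x + snd y + \<tau>) \<sigma>" for y \<tau>
    using \<sigma> by (simp add: heat_nonneg D1_nonneg)
  show "heat (fst x - fst y) (\<sigma> + k * \<tau>) * D1 (snd x + snd y + \<tau>) \<sigma>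
        \<le> ((4 * pi * (\<sigma> + k * \<tau>)) powr (- real DIM('a) / 2) * (8 * pi * \<sigma>) powr (-1/2)) *
           (sqrt 2 * \<sigma> powr (-1/2) * exp (- ((snd x + \<tau>)^2) / (8 * \<sigma>)))"
    if y: "y \<in> Omega" and \<tau>: "\<tau> \<in> {0<..}" for y \<tau>
  proof -
    have yN: "snd y > 0" using y by (simp add: Omega_iff)
    have st: "\<sigma> + k * \<tau> > 0" using \<sigma> k \<tau> by (simp add: add_pos_nonneg)
    have h1: "heat (fst x - fst y) (\<sigma> + k * \<tau>) \<le> (4 * pi * (\<sigma> + k * \<tau>)) powr (- real DIM('a) / 2)"
      by (rule heat_le[OF st])
    have "D1 (snd x + snd y + \<tau>) \<sigma> = sqrt 2 * \<sigma> powr (-1/2) * heat ((snd x + \<tau>) + snd y) (2 * \<sigma>)"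
      by (simp add: D1_def add_ac)
    also have "\<dots> \<le> sqrt 2 * \<sigma> powr (-1/2) * (exp (- ((snd x + \<tau>)^2) / (4 * (2 * \<sigma>))) * heat (snd y) (2 * \<sigma>))"
      using x yN \<tau> \<sigma> by (intro mult_left_mono heat_shift1) auto
    also have "heat (snd y) (2 * \<sigma>) \<le> (8 * pi * \<sigma>) powr (-1/2)"
      using heat_2s[of "snd y" \<sigma>] \<sigma> by (simp add: mult_left_le)
    finally have h2: "D1 (snd x + snd y + \<tau>) \<sigma> \<le> sqrt 2 * \<sigma> powr (-1/2) * (exp (- ((snd x + \<tau>)^2) / (8 * \<sigma>)) * (8 * pi * \<sigma>) powr (-1/2))"
      by (simp add: mult_left_mono)
    have "heat (fst x - fst y) (\<sigma> + k * \<tau>) * D1 (snd x + snd y + \<tau>) \<sigma>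
        \<le> (4 * pi * (\<sigma> + k * \<tau>)) powr (- real DIM('a) / 2) * (sqrt 2 * \<sigma> powr (-1/2) * (exp (- ((snd x + \<tau>)^2) / (8 * \<sigma>)) * (8 * pi * \<sigma>) powr (-1/2)))"
      using h1 h2 \<sigma> by (intro mult_mono) (auto simp: D1_nonneg)
    then show ?thesis by (simp add: mult_ac)
  qed
  show "(\<integral>\<^sup>+y. ennreal (indicator Omega y * (heat (fst x - fst y) (\<sigma> + k * \<tau>) * D1 (snd x + snd y + \<tau>) \<sigma>)) \<partial>lborel)
        \<le> ennreal (sqrt 2 * \<sigma> powr (-1/2) * exp (- ((snd x + \<tau>)^2) / (8 * \<sigma>)))" if "\<tau> \<in> {0<..}" for \<tau>
    using that \<sigma> k by (intro kernel_M x) (auto simp: add_pos_nonneg)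
  show "0 < (4 * pi * (\<sigma> + k * \<tau>)) powr (- real DIM('a) / 2) * (8 * pi * \<sigma>) powr (-1/2)" if "\<tau> \<in> {0<..}" for \<tau>
  proof -
    have "\<sigma> + k * \<tau> > 0" using that \<sigma> k by (simp add: add_pos_nonneg)
    then show ?thesis using \<sigma> by simp
  qed
qed (use \<sigma> k in \<open>auto simp: add_pos_nonneg\<close>)

definition Fh :: "real \<Rightarrow> real \<Rightarrow> real" where
  "Fh c z = (if c = 1 then ln z else z powr (1 - c) / (1 - c))"

lemma Fh_deriv:
  assumes "z > 0"
  shows "(Fh c has_real_derivative z powr (- c)) (at z)"
proof (cases "c = 1")
  case True
  have "(ln has_real_derivative inverse z) (at z)" using assms by (rule DERIV_ln)
  moreover have "inverse z = z powr (- c)" using True assms by (simp add: powr_minus)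
  ultimately show ?thesis using True unfolding Fh_def by simp
next
  case False
  have "((\<lambda>z. z powr (1 - c)) has_real_derivative (1 - c) * z powr (1 - c - 1)) (at z)"
    using assms by (rule has_real_derivative_powr)
  then have "((\<lambda>z. z powr (1 - c) / (1 - c)) has_real_derivative (1 - c) * z powr (1 - c - 1) / (1 - c)) (at z)"
    by (rule DERIV_cdivide)
  moreover have "(1 - c) * z powr (1 - c - 1) / (1 - c) = z powr (- c)" using False by simp
  ultimately show ?thesis using False unfolding Fh_def by simp
qed

lemma head_integral:
  assumes \<sigma>: "\<sigma> > 0" and k: "k > 0" and L: "L \<ge> 0"
  shows "(\<integral>\<^sup>+\<tau>. ennreal ((\<sigma> + k * \<tau>) powr (- c)) * indicator {0..L} \<tau> \<partial>lborel)
         = ennreal ((Fh c (\<sigma> + k * L) - Fh c \<sigma>) / k)"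
proof -
  have d: "((\<lambda>\<tau>. Fh c (\<sigma> + k * \<tau>) / k) has_real_derivative (\<sigma> + k * \<tau>) powr (- c)) (at \<tau>)"
    if "\<tau> \<in> {0..L}" for \<tau>
  proof -
    have pos: "\<sigma> + k * \<tau> > 0" using that \<sigma> k by (simp add: add_pos_nonneg)
    have "((\<lambda>\<tau>. \<sigma> + k * \<tau>) has_real_derivative k) (at \<tau>)"
      by (auto intro!: derivative_eq_intros)
    from DERIV_chain2[OF Fh_deriv[OF pos] this]
    have "((\<lambda>\<tau>. Fh c (\<sigma> + k * \<tau>)) has_real_derivative (\<sigma> + k * \<tau>) powr (- c) * k) (at \<tau>)" .
    from DERIV_cdivide[OF this, of k] show ?thesis using k by simp
  qed
  have "((\<lambda>\<tau>. (\<sigma> + k * \<tau>) powr (- c)) has_integral (Fh c (\<sigma> + k * L) / k - Fh c (\<sigma> + k * 0) / k)) {0..L}"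
    by (rule fundamental_theorem_of_calculus[OF L])
       (use d in \<open>auto simp: has_real_derivative_iff_has_vector_derivative[symmetric] intro: DERIV_subset\<close>)
  from nn_integral_has_integral_lebesgue'[OF _ this]
  show ?thesis by (simp add: diff_divide_distrib)
qed

lemma I_bound:
  assumes \<sigma>: "\<sigma> > 0" and k: "k > 0" and c: "c \<ge> 0"
  shows "(\<integral>\<^sup>+\<tau>. ennreal (indicator {0<..} \<tau> * ((\<sigma> + k * \<tau>) powr (- c) * exp (- (\<tau>^2) / (8 * \<sigma>)))) \<partial>lborel)
         \<le> ennreal ((Fh c (\<sigma> + k * sqrt \<sigma>) - Fh c \<sigma>) / k + (k * sqrt \<sigma>) powr (- c) * (8 * pi * \<sigma>) powr (1/2))"
proof -
  define L where "L = sqrt \<sigma>"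
  have L: "L > 0" using \<sigma> by (simp add: L_def)
  define T0 where "T0 = (k * L) powr (- c) * (8 * pi * \<sigma>) powr (1/2)"
  have T00: "T0 \<ge> 0" by (simp add: T0_def)
  have "(\<integral>\<^sup>+\<tau>. ennreal (indicator {0<..} \<tau> * ((\<sigma> + k * \<tau>) powr (- c) * exp (- (\<tau>^2) / (8 * \<sigma>)))) \<partial>lborel)
     \<le> (\<integral>\<^sup>+\<tau>. ennreal ((\<sigma> + k * \<tau>) powr (- c)) * indicator {0..L} \<tau> + ennreal T0 * ennreal (heat (\<tau>::real) (2 * \<sigma>)) \<partial>lborel)"
  proof (intro nn_integral_mono)
    fix \<tau> :: real
    show "ennreal (indicator {0<..} \<tau> * ((\<sigma> + k * \<tau>) powr (- c) * exp (- (\<tau>^2) / (8 * \<sigma>))))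
      \<le> ennreal ((\<sigma> + k * \<tau>) powr (- c)) * indicator {0..L} \<tau> + ennreal T0 * ennreal (heat \<tau> (2 * \<sigma>))"
    proof (cases "\<tau> > 0")
      case False then show ?thesis by simp
    next
      case True
      show ?thesis
      proof (cases "\<tau> \<le> L")
        case True2: True
        have "(\<sigma> + k * \<tau>) powr (- c) * exp (- (\<tau>^2) / (8 * \<sigma>)) \<le> (\<sigma> + k * \<tau>) powr (- c) * 1"
          using \<sigma> by (intro mult_left_mono) auto
        then have "ennreal (indicator {0<..} \<tau> * ((\<sigma> + k * \<tau>) powr (- c) * exp (- (\<tau>^2) / (8 * \<sigma>))))
            \<le> ennreal ((\<sigma> + k * \<tau>) powr (- c)) * indicator {0..L} \<tau>"
          using True True2 by (simp add: ennreal_leI)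
        then show ?thesis by (rule order_trans) simp
      next
        case False
        have "(\<sigma> + k * \<tau>) powr (- c) \<le> (k * L) powr (- c)"
          using False k \<sigma> c L by (intro powr_mono2') (auto intro: add_increasing)
        then have "(\<sigma> + k * \<tau>) powr (- c) * exp (- (\<tau>^2) / (8 * \<sigma>)) \<le> (k * L) powr (- c) * exp (- (\<tau>^2) / (8 * \<sigma>))"
          by (rule mult_right_mono) simp
        also have "\<dots> = T0 * heat \<tau> (2 * \<sigma>)"
          unfolding T0_def exp_as_heat[OF \<sigma>] by (simp add: mult_ac)
        finally have "ennreal (indicator {0<..} \<tau> * ((\<sigma> + k * \<tau>) powr (- c) * exp (- (\<tau>^2) / (8 * \<sigma>))))
            \<le> ennreal T0 * ennreal (heat \<tau> (2 * \<sigma>))"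
          using True T00 by (simp add: ennreal_mult[symmetric] heat_nonneg ennreal_leI del: ennreal_mult)
        then show ?thesis by (rule order_trans) simp
      qed
    qed
  qed
  also have "\<dots> = (\<integral>\<^sup>+\<tau>. ennreal ((\<sigma> + k * \<tau>) powr (- c)) * indicator {0..L} \<tau> \<partial>lborel)
       + ennreal T0 * (\<integral>\<^sup>+\<tau>. ennreal (heat (\<tau>::real) (2 * \<sigma>)) \<partial>lborel)"
    by (subst nn_integral_add) (auto intro!: nn_integral_cmult)
  also have "\<dots> = ennreal ((Fh c (\<sigma> + k * L) - Fh c \<sigma>) / k) + ennreal T0"
    using head_integral[OF \<sigma> k less_imp_le[OF L]] heat_integral[of "2 * \<sigma>" "0::real"] \<sigma> by simp
  also have "\<dots> = ennreal ((Fh c (\<sigma> + k * L) - Fh c \<sigma>) / k + T0)"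
  proof (rule ennreal_plus[symmetric, OF _ T00])
    have "Fh c \<sigma> \<le> Fh c (\<sigma> + k * L)"
    proof (rule DERIV_nonneg_imp_nondecreasing[of \<sigma> "\<sigma> + k * L" "Fh c"])
      show "\<sigma> \<le> \<sigma> + k * L" using k L by simp
      show "\<exists>y. DERIV (Fh c) x :> y \<and> 0 \<le> y" if "\<sigma> \<le> x" "x \<le> \<sigma> + k * L" for x
        using Fh_deriv[of x c] that \<sigma> by auto
    qed
    then show "0 \<le> (Fh c (\<sigma> + k * L) - Fh c \<sigma>) / k" using k by simp
  qed
  finally show ?thesis by (simp add: L_def T0_def)
qed

lemma powr_exp_bound:
  fixes u m :: real
  assumes u: "u > 0" and m: "m > 0"
  shows "u powr m * exp (- u) \<le> m powr m"
proof -
  have "ln (u / m) \<le> u / m - 1" using u m by (intro ln_le_minus_one) simp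
  then have "m * ln (u / m) \<le> m * (u / m - 1)" using m by (intro mult_left_mono) auto
  then have "m * ln u - u \<le> m * ln m" using u m by (simp add: ln_div algebra_simps)
  then have "exp (m * ln u - u) \<le> exp (m * ln m)" by simp
  then show ?thesis using u m by (simp add: powr_def exp_diff exp_minus field_simps)
qed

lemma Ubound:
  fixes m \<epsilon> R :: real
  assumes m: "m > 0" and \<epsilon>: "\<epsilon> > 0" and R: "R > 0"
  shows "\<exists>C. \<forall>\<sigma> xN. \<sigma> > 0 \<longrightarrow> xN \<ge> 0 \<longrightarrow> xN + \<epsilon> * \<sigma> > R \<longrightarrow> \<sigma> powr (- m) * exp (- (xN^2) / (8 * \<sigma>)) \<le> C"
proof -
  define s0 where "s0 = R / (2 * \<epsilon>)"
  define a where "a = R^2 / 32"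
  have s0: "s0 > 0" and a: "a > 0" using R \<epsilon> by (auto simp: s0_def a_def)
  show ?thesis
  proof (intro exI[of _ "max (s0 powr (- m)) (a powr (- m) * m powr m)"] allI impI)
    fix \<sigma> xN :: real
    assume \<sigma>: "\<sigma> > 0" and xN: "xN \<ge> 0" and reg: "xN + \<epsilon> * \<sigma> > R"
    have e1: "exp (- (xN^2) / (8 * \<sigma>)) \<le> 1" using \<sigma> by simp
    show "\<sigma> powr (- m) * exp (- (xN^2) / (8 * \<sigma>)) \<le> max (s0 powr (- m)) (a powr (- m) * m powr m)"
    proof (cases "\<sigma> \<ge> s0")
      case True
      have "\<sigma> powr (- m) \<le> s0 powr (- m)" using True s0 m by (intro powr_mono2') auto
      then have "\<sigma> powr (- m) * exp (- (xN^2) / (8 * \<sigma>)) \<le> s0 powr (- m) * 1"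
        using e1 by (intro mult_mono) auto
      then show ?thesis by simp
    next
      case False
      then have "\<epsilon> * \<sigma> < R / 2" using \<epsilon> by (simp add: s0_def field_simps)
      then have "xN \<ge> R / 2" using reg by simp
      then have "xN^2 \<ge> (R/2)^2" using R by (intro power_mono) auto
      then have "(R/2)^2 / (8 * \<sigma>) \<le> xN^2 / (8 * \<sigma>)" using \<sigma> by (intro divide_right_mono) auto
      moreover have "(R/2)^2 / (8 * \<sigma>) = a / \<sigma>" by (simp add: a_def power_divide)
      ultimately have ex: "exp (- (xN^2) / (8 * \<sigma>)) \<le> exp (- (a / \<sigma>))" by simp
      define u where "u = a / \<sigma>"
      have u: "u > 0" using a \<sigma> by (simp add: u_def)
      have su: "\<sigma> = a / u" using a \<sigma> by (simp add: u_def)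
      have "\<sigma> powr (- m) = a powr (- m) * u powr m"
        unfolding su using a u by (simp add: powr_divide powr_minus field_simps)
      then have "\<sigma> powr (- m) * exp (- (xN^2) / (8 * \<sigma>)) \<le> a powr (- m) * (u powr m * exp (- u))"
        using ex by (simp add: u_def mult.assoc mult_left_mono)
      also have "\<dots> \<le> a powr (- m) * m powr m"
        using powr_exp_bound[OF u m] by (intro mult_left_mono) auto
      finally show ?thesis by simp
    qed
  qed
qed

lemma powr_subadd:
  fixes a b r :: real
  assumes a: "a \<ge> 0" and b: "b \<ge> 0" and r: "0 < r" "r \<le> 1"
  shows "(a + b) powr r \<le> a powr r + b powr r"
proof (cases "a + b = 0")
  case True then show ?thesis using assms by simp
next
  case False
  then have s: "a + b > 0" using assms by simp
  have x1: "a / (a + b) \<le> (a / (a + b)) powr r"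
    using powr_mono'[OF r(2), of "a / (a + b)"] a b s by simp
  have x2: "b / (a + b) \<le> (b / (a + b)) powr r"
    using powr_mono'[OF r(2), of "b / (a + b)"] a b s by simp
  have "(a + b) powr r = (a + b) powr r * (a / (a + b) + b / (a + b))"
    using s by (simp add: add_divide_distrib[symmetric])
  also have "\<dots> \<le> (a + b) powr r * ((a / (a + b)) powr r + (b / (a + b)) powr r)"
    using x1 x2 by (intro mult_left_mono add_mono) auto
  also have "\<dots> = a powr r + b powr r"
    using s a b by (simp add: powr_divide distrib_left)
  finally show ?thesis .
qed

lemma tail_eq:
  assumes \<sigma>: "\<sigma> > 0" and k: "k > 0"
  shows "(k * sqrt \<sigma>) powr (- c) * (8 * pi * \<sigma>) powr (1/2) = sqrt (8 * pi) * k powr (- c) * \<sigma> powr ((1 - c) / 2)"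
proof -
  have "(k * sqrt \<sigma>) powr (- c) = k powr (- c) * \<sigma> powr (- c / 2)"
    using \<sigma> k by (simp add: powr_mult powr_half_sqrt[symmetric] powr_powr)
  moreover have "(8 * pi * \<sigma>) powr (1/2) = sqrt (8 * pi) * \<sigma> powr (1/2)"
    using \<sigma> by (simp add: powr_mult powr_half_sqrt real_sqrt_mult)
  moreover have "\<sigma> powr (- c / 2) * \<sigma> powr (1/2) = \<sigma> powr ((1 - c) / 2)"
    by (simp add: powr_add[symmetric] diff_divide_distrib)
  ultimately show ?thesis by (simp add: mult_ac)
qed

lemma case_lt1:
  assumes c: "0 \<le> c" "c < 1" and \<sigma>: "\<sigma> > 0" and k: "k > 0"
  shows "(Fh c (\<sigma> + k * sqrt \<sigma>) - Fh c \<sigma>) / k + (k * sqrt \<sigma>) powr (- c) * (8 * pi * \<sigma>) powr (1/2)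
         \<le> k powr (- c) * (1 / (1 - c) + sqrt (8 * pi)) * \<sigma> powr ((1 - c) / 2)"
proof -
  have c1: "c \<noteq> 1" using c by simp
  have "(\<sigma> + k * sqrt \<sigma>) powr (1 - c) \<le> \<sigma> powr (1 - c) + (k * sqrt \<sigma>) powr (1 - c)"
    using c \<sigma> k by (intro powr_subadd) auto
  then have "Fh c (\<sigma> + k * sqrt \<sigma>) - Fh c \<sigma> \<le> (k * sqrt \<sigma>) powr (1 - c) / (1 - c)"
    using c unfolding Fh_def by (simp add: c1 diff_divide_distrib[symmetric] divide_right_mono)
  also have "(k * sqrt \<sigma>) powr (1 - c) = k * (k powr (- c) * \<sigma> powr ((1 - c) / 2))"
  proof -
    have "(k * sqrt \<sigma>) powr (1 - c) = k powr (1 - c) * \<sigma> powr ((1 - c) / 2)"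
      using \<sigma> k by (simp add: powr_mult powr_half_sqrt[symmetric] powr_powr)
    moreover have "k powr (1 - c) = k * k powr (- c)" using k by (simp add: powr_diff powr_minus field_simps)
    ultimately show ?thesis by simp
  qed
  finally have H: "(Fh c (\<sigma> + k * sqrt \<sigma>) - Fh c \<sigma>) / k \<le> k powr (- c) * \<sigma> powr ((1 - c) / 2) / (1 - c)"
    using k by (simp add: divide_le_eq field_simps)
  show ?thesis using H tail_eq[OF \<sigma> k, of c] by (simp add: algebra_simps)
qed

lemma case_gt1:
  assumes c: "c > 1" and \<sigma>: "\<sigma> > 0" and k: "k \<ge> 1"
  shows "(Fh c (\<sigma> + k * sqrt \<sigma>) - Fh c \<sigma>) / k + (k * sqrt \<sigma>) powr (- c) * (8 * pi * \<sigma>) powr (1/2)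
         \<le> (1 / k) * (\<sigma> powr (1 - c) / (c - 1) + sqrt (8 * pi) * \<sigma> powr ((1 - c) / 2))"
proof -
  have k0: "k > 0" using k by simp
  have c1: "c \<noteq> 1" using c by simp
  have n1: "1 - c \<noteq> 0" "c - 1 \<noteq> 0" using c by auto
  have a: "(\<sigma> + k * sqrt \<sigma>) powr (1 - c) / (1 - c) \<le> 0"
    using c by (intro divide_nonneg_neg) auto
  have b: "- (\<sigma> powr (1 - c) / (1 - c)) = \<sigma> powr (1 - c) / (c - 1)"
    using n1 by (simp add: field_simps)
  have "Fh c (\<sigma> + k * sqrt \<sigma>) - Fh c \<sigma> \<le> \<sigma> powr (1 - c) / (c - 1)"
    unfolding Fh_def using c1 a b by simp
  then have H: "(Fh c (\<sigma> + k * sqrt \<sigma>) - Fh c \<sigma>) / k \<le> (1 / k) * (\<sigma> powr (1 - c) / (c - 1))"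
  proof -
    have "(Fh c (\<sigma> + k * sqrt \<sigma>) - Fh c \<sigma>) / k \<le> (\<sigma> powr (1 - c) / (c - 1)) / k"
      using \<open>Fh c (\<sigma> + k * sqrt \<sigma>) - Fh c \<sigma> \<le> _\<close> k0 by (intro divide_right_mono) auto
    then show ?thesis by (simp add: mult.commute)
  qed
  have "k powr (- c) \<le> k powr (- 1)" using k c by (intro powr_mono) auto
  then have "k powr (- c) \<le> 1 / k" using k0 by (simp add: powr_minus_divide)
  then have T: "sqrt (8 * pi) * k powr (- c) * \<sigma> powr ((1 - c) / 2) \<le> sqrt (8 * pi) * (1 / k) * \<sigma> powr ((1 - c) / 2)"
    by (intro mult_right_mono mult_left_mono) auto
  show ?thesis using H T tail_eq[OF \<sigma> k0, of c] by (simp add: algebra_simps)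
qed

lemma case_eq1:
  assumes \<sigma>: "\<sigma> > 0" and k: "k \<ge> 1"
  shows "(Fh 1 (\<sigma> + k * sqrt \<sigma>) - Fh 1 \<sigma>) / k + (k * sqrt \<sigma>) powr (- 1) * (8 * pi * \<sigma>) powr (1/2)
         \<le> (1 / k) * (ln k + \<sigma> powr (-1/2) + sqrt (8 * pi))"
proof -
  have k0: "k > 0" using k by simp
  have ss: "sqrt \<sigma> > 0" using \<sigma> by simp
  have pos: "\<sigma> + k * sqrt \<sigma> > 0" using \<sigma> k0 ss by (simp add: add_pos_pos)
  have "Fh 1 (\<sigma> + k * sqrt \<sigma>) - Fh 1 \<sigma> = ln ((\<sigma> + k * sqrt \<sigma>) / \<sigma>)"
    unfolding Fh_def using \<sigma> pos by (simp add: ln_div)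
  also have "(\<sigma> + k * sqrt \<sigma>) / \<sigma> = 1 + k * (1 / sqrt \<sigma>)"
    using \<sigma> by (simp add: field_simps)
  also have "ln (1 + k * (1 / sqrt \<sigma>)) \<le> ln (k * (1 + 1 / sqrt \<sigma>))"
    using k ss by (subst ln_le_cancel_iff) (auto simp: algebra_simps add_pos_nonneg)
  also have "\<dots> = ln k + ln (1 + 1 / sqrt \<sigma>)"
  proof -
    have "1 + 1 / sqrt \<sigma> > 0" using ss by (simp add: add_pos_nonneg)
    then show ?thesis using k0 by (simp add: ln_mult)
  qed
  also have "ln (1 + 1 / sqrt \<sigma>) \<le> 1 / sqrt \<sigma>"
    using ss by (intro ln_add_one_self_le_self) simp
  finally have H0: "Fh 1 (\<sigma> + k * sqrt \<sigma>) - Fh 1 \<sigma> \<le> ln k + \<sigma> powr (-1/2)"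
    using \<sigma> by (simp add: powr_minus_divide powr_half_sqrt)
  have T: "(k * sqrt \<sigma>) powr (- 1) * (8 * pi * \<sigma>) powr (1/2) = sqrt (8 * pi) * (1 / k)"
    using tail_eq[OF \<sigma> k0, of 1] k0 \<sigma> by (simp add: powr_minus_divide)
  have le: "(Fh 1 (\<sigma> + k * sqrt \<sigma>) - Fh 1 \<sigma>) / k \<le> (ln k + \<sigma> powr (-1/2)) / k"
    using H0 k0 by (intro divide_right_mono) auto
  have eq: "(1 / k) * (ln k + \<sigma> powr (-1/2) + sqrt (8 * pi)) = (ln k + \<sigma> powr (-1/2)) / k + sqrt (8 * pi) * (1 / k)"
    using k0 by (simp add: field_simps)
  show ?thesis unfolding T eq using le by linarith
qed

lemma X_eq:
  fixes D p \<sigma> k \<tau> :: real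
  assumes p: "p \<ge> 1" and \<sigma>: "\<sigma> > 0" and pos: "\<sigma> + k * \<tau> > 0"
  shows "((4 * pi * (\<sigma> + k * \<tau>)) powr (- D / 2) * (8 * pi * \<sigma>) powr (-1/2)) powr (1/p) * (sqrt 2 * \<sigma> powr (-1/2))
       = ((4 * pi) powr (- (D / (2 * p))) * (8 * pi) powr (- (1 / (2 * p))) * sqrt 2) * \<sigma> powr (- (1 / (2 * p) + 1/2))
         * (\<sigma> + k * \<tau>) powr (- (D / (2 * p)))"
proof -
  have e1: "((4 * pi * (\<sigma> + k * \<tau>)) powr (- D / 2) * (8 * pi * \<sigma>) powr (-1/2)) powr (1/p)
      = (4 * pi * (\<sigma> + k * \<tau>)) powr (- (D / (2 * p))) * (8 * pi * \<sigma>) powr (- (1 / (2 * p)))"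
    using p \<sigma> pos by (simp add: powr_mult powr_powr)
  have e2: "(4 * pi * (\<sigma> + k * \<tau>)) powr (- (D / (2 * p))) = (4 * pi) powr (- (D / (2 * p))) * (\<sigma> + k * \<tau>) powr (- (D / (2 * p)))"
    using pos by (simp add: powr_mult)
  have e3: "(8 * pi * \<sigma>) powr (- (1 / (2 * p))) = (8 * pi) powr (- (1 / (2 * p))) * \<sigma> powr (- (1 / (2 * p)))"
    using \<sigma> by (simp add: powr_mult)
  have e4: "\<sigma> powr (- (1 / (2 * p))) * \<sigma> powr (-1/2) = \<sigma> powr (- (1 / (2 * p) + 1/2))"
    by (simp add: powr_add[symmetric])
  show ?thesis unfolding e1 e2 e3 using e4 by (simp add: mult_ac)
qed

lemma A_bound:
  fixes D p \<sigma> k xN :: real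
  assumes p: "p \<ge> 1" and \<sigma>: "\<sigma> > 0" and k: "k > 0" and xN: "xN \<ge> 0" and D: "D \<ge> 0"
  defines "c \<equiv> D / (2 * p)"
  defines "b0 \<equiv> (4 * pi) powr (- (D / (2 * p))) * (8 * pi) powr (- (1 / (2 * p))) * sqrt 2"
  defines "q \<equiv> 1 / (2 * p) + 1/2"
  shows "(\<integral>\<^sup>+\<tau>. ennreal (indicator {0<..} \<tau> *
            (((4 * pi * (\<sigma> + k * \<tau>)) powr (- D / 2) * (8 * pi * \<sigma>) powr (-1/2)) powr (1/p)
             * (sqrt 2 * \<sigma> powr (-1/2) * exp (- ((xN + \<tau>)^2) / (8 * \<sigma>))))) \<partial>lborel)
         \<le> ennreal (b0 * (\<sigma> powr (- q) * exp (- (xN^2) / (8 * \<sigma>)))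
              * ((Fh c (\<sigma> + k * sqrt \<sigma>) - Fh c \<sigma>) / k + (k * sqrt \<sigma>) powr (- c) * (8 * pi * \<sigma>) powr (1/2)))"
proof -
  define P where "P = b0 * (\<sigma> powr (- q) * exp (- (xN^2) / (8 * \<sigma>)))"
  have P0: "P \<ge> 0" by (simp add: P_def b0_def)
  have c0: "c \<ge> 0" using D p by (simp add: c_def)
  have "(\<integral>\<^sup>+\<tau>. ennreal (indicator {0<..} \<tau> *
            (((4 * pi * (\<sigma> + k * \<tau>)) powr (- D / 2) * (8 * pi * \<sigma>) powr (-1/2)) powr (1/p)
             * (sqrt 2 * \<sigma> powr (-1/2) * exp (- ((xN + \<tau>)^2) / (8 * \<sigma>))))) \<partial>lborel)
      \<le> (\<integral>\<^sup>+\<tau>. ennreal P * ennreal (indicator {0<..} \<tau> * ((\<sigma> + k * \<tau>) powr (- c) * exp (- (\<tau>^2) / (8 * \<sigma>)))) \<partial>lborel)"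
  proof (intro nn_integral_mono)
    fix \<tau> :: real
    show "ennreal (indicator {0<..} \<tau> *
            (((4 * pi * (\<sigma> + k * \<tau>)) powr (- D / 2) * (8 * pi * \<sigma>) powr (-1/2)) powr (1/p)
             * (sqrt 2 * \<sigma> powr (-1/2) * exp (- ((xN + \<tau>)^2) / (8 * \<sigma>)))))
        \<le> ennreal P * ennreal (indicator {0<..} \<tau> * ((\<sigma> + k * \<tau>) powr (- c) * exp (- (\<tau>^2) / (8 * \<sigma>))))"
    proof (cases "\<tau> > 0")
      case False then show ?thesis by simp
    next
      case True
      have pos: "\<sigma> + k * \<tau> > 0" using True \<sigma> k by (simp add: add_pos_pos)
      have ex: "exp (- ((xN + \<tau>)^2) / (8 * \<sigma>)) \<le> exp (- (xN^2) / (8 * \<sigma>)) * exp (- (\<tau>^2) / (8 * \<sigma>))"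
      proof -
        have "- ((xN + \<tau>)^2) / (8 * \<sigma>) \<le> - (xN^2) / (8 * \<sigma>) + - (\<tau>^2) / (8 * \<sigma>)"
          using xN True \<sigma> by (simp add: divide_right_mono power2_eq_square field_simps)
        then show ?thesis by (simp add: exp_add[symmetric])
      qed
      have "((4 * pi * (\<sigma> + k * \<tau>)) powr (- D / 2) * (8 * pi * \<sigma>) powr (-1/2)) powr (1/p)
             * (sqrt 2 * \<sigma> powr (-1/2) * exp (- ((xN + \<tau>)^2) / (8 * \<sigma>)))
          = (b0 * \<sigma> powr (- q) * (\<sigma> + k * \<tau>) powr (- c)) * exp (- ((xN + \<tau>)^2) / (8 * \<sigma>))"
        using X_eq[OF p \<sigma> pos, of D] unfolding b0_def q_def c_def by (simp add: mult_ac)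
      also have "\<dots> \<le> (b0 * \<sigma> powr (- q) * (\<sigma> + k * \<tau>) powr (- c)) * (exp (- (xN^2) / (8 * \<sigma>)) * exp (- (\<tau>^2) / (8 * \<sigma>)))"
        using ex by (intro mult_left_mono) (auto simp: b0_def)
      also have "\<dots> = P * ((\<sigma> + k * \<tau>) powr (- c) * exp (- (\<tau>^2) / (8 * \<sigma>)))"
        by (simp add: P_def mult_ac)
      finally show ?thesis using True P0
        by (simp add: ennreal_mult[symmetric] ennreal_leI del: ennreal_mult)
    qed
  qed
  also have "\<dots> = ennreal P * (\<integral>\<^sup>+\<tau>. ennreal (indicator {0<..} \<tau> * ((\<sigma> + k * \<tau>) powr (- c) * exp (- (\<tau>^2) / (8 * \<sigma>)))) \<partial>lborel)"
    by (rule nn_integral_cmult) measurable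
  also have "\<dots> \<le> ennreal P * ennreal ((Fh c (\<sigma> + k * sqrt \<sigma>) - Fh c \<sigma>) / k + (k * sqrt \<sigma>) powr (- c) * (8 * pi * \<sigma>) powr (1/2))"
    by (intro mult_left_mono I_bound \<sigma> k c0) simp
  also have "\<dots> = ennreal (P * ((Fh c (\<sigma> + k * sqrt \<sigma>) - Fh c \<sigma>) / k + (k * sqrt \<sigma>) powr (- c) * (8 * pi * \<sigma>) powr (1/2)))"
    using P0 by (simp add: ennreal_mult')
  finally show ?thesis by (simp add: P_def)
qed

lemma Ubound0:
  fixes m \<epsilon> R :: real
  assumes m: "m > 0" and \<epsilon>: "\<epsilon> > 0" and R: "R > 0"
  obtains U where "U \<ge> 0" "\<And>\<sigma> xN. \<sigma> > 0 \<Longrightarrow> xN \<ge> 0 \<Longrightarrow> xN + \<epsilon> * \<sigma> > R \<Longrightarrow> \<sigma> powr (- m) * exp (- (xN^2) / (8 * \<sigma>)) \<le> U"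
proof -
  obtain C where C: "\<forall>\<sigma> xN. \<sigma> > 0 \<longrightarrow> xN \<ge> 0 \<longrightarrow> xN + \<epsilon> * \<sigma> > R \<longrightarrow> \<sigma> powr (- m) * exp (- (xN^2) / (8 * \<sigma>)) \<le> C"
    using Ubound[OF m \<epsilon> R] by blast
  show ?thesis
  proof (rule that[of "max C 0"])
    fix \<sigma> xN :: real
    assume "\<sigma> > 0" "xN \<ge> 0" "xN + \<epsilon> * \<sigma> > R"
    then have "\<sigma> powr (- m) * exp (- (xN^2) / (8 * \<sigma>)) \<le> C" using C by blast
    then show "\<sigma> powr (- m) * exp (- (xN^2) / (8 * \<sigma>)) \<le> max C 0" by linarith
  qed simp
qed

lemma pow_merge: "\<sigma> powr (- q) * \<sigma> powr a = \<sigma> powr (- (q - a))" for \<sigma> :: real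
  using powr_add[of \<sigma> "- q" a] by simp

lemma claim3_W:
  fixes D p \<epsilon> R :: real
  assumes D: "D \<ge> 0" and p: "p \<ge> 1" and \<epsilon>: "\<epsilon> > 0" and R: "R > 0"
  shows "\<exists>C. \<forall>k \<ge> exp 1. \<forall>\<sigma> xN. \<sigma> > 0 \<longrightarrow> xN \<ge> 0 \<longrightarrow> xN + \<epsilon> * \<sigma> > R \<longrightarrow>
           (\<integral>\<^sup>+\<tau>. ennreal (indicator {0<..} \<tau> *
            (((4 * pi * (\<sigma> + k * \<tau>)) powr (- D / 2) * (8 * pi * \<sigma>) powr (-1/2)) powr (1/p)
             * (sqrt 2 * \<sigma> powr (-1/2) * exp (- ((xN + \<tau>)^2) / (8 * \<sigma>))))) \<partial>lborel)
           \<le> ennreal (C * (if p < D / 2 then 1 / k else if p = D / 2 then ln k / k else k powr (- D / (2 * p))))"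
proof -
  define c where "c = D / (2 * p)"
  define b0 where "b0 = (4 * pi) powr (- (D / (2 * p))) * (8 * pi) powr (- (1 / (2 * p))) * sqrt 2"
  define q where "q = 1 / (2 * p) + 1/2"
  define G where "G \<sigma> k = (Fh c (\<sigma> + k * sqrt \<sigma>) - Fh c \<sigma>) / k + (k * sqrt \<sigma>) powr (- c) * (8 * pi * \<sigma>) powr (1/2)" for \<sigma> k
  define e0 where "e0 \<sigma> xN = exp (- (xN^2) / (8 * \<sigma>))" for \<sigma> xN :: real
  have b0: "b0 \<ge> 0" by (simp add: b0_def)
  have c0: "c \<ge> 0" using D p by (simp add: c_def)
  have q0: "q > 1/2" using p by (simp add: q_def)
  have AB: "(\<integral>\<^sup>+\<tau>. ennreal (indicator {0<..} \<tau> *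
            (((4 * pi * (\<sigma> + k * \<tau>)) powr (- D / 2) * (8 * pi * \<sigma>) powr (-1/2)) powr (1/p)
             * (sqrt 2 * \<sigma> powr (-1/2) * exp (- ((xN + \<tau>)^2) / (8 * \<sigma>))))) \<partial>lborel)
           \<le> ennreal (b0 * (\<sigma> powr (- q) * e0 \<sigma> xN) * G \<sigma> k)"
    if "\<sigma> > 0" "k > 0" "xN \<ge> 0" for \<sigma> k xN
    using A_bound[OF p that D] unfolding b0_def q_def c_def G_def e0_def .
  have ek: "k \<ge> exp 1 \<Longrightarrow> k \<ge> 1" for k :: real
    using exp_ge_add_one_self[of 1] by linarith
  consider "p < D / 2" | "p = D / 2" | "p > D / 2" by linarith
  then show ?thesis
  proof cases
    case 1
    then have c1: "c > 1" using p by (simp add: c_def field_simps)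
    define m1 where "m1 = q - (1 - c) / 2"
    define m2 where "m2 = q - (1 - c)"
    have m1: "m1 > 0" and m2: "m2 > 0" using q0 c1 by (auto simp: m1_def m2_def)
    obtain U1 where U1: "U1 \<ge> 0" "\<And>\<sigma> xN. \<sigma> > 0 \<Longrightarrow> xN \<ge> 0 \<Longrightarrow> xN + \<epsilon> * \<sigma> > R \<Longrightarrow> \<sigma> powr (- m1) * e0 \<sigma> xN \<le> U1"
      using Ubound0[OF m1 \<epsilon> R] unfolding e0_def by metis
    obtain U2 where U2: "U2 \<ge> 0" "\<And>\<sigma> xN. \<sigma> > 0 \<Longrightarrow> xN \<ge> 0 \<Longrightarrow> xN + \<epsilon> * \<sigma> > R \<Longrightarrow> \<sigma> powr (- m2) * e0 \<sigma> xN \<le> U2"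
      using Ubound0[OF m2 \<epsilon> R] unfolding e0_def by metis
    show ?thesis
    proof (intro exI[of _ "b0 * (U2 / (c - 1) + sqrt (8 * pi) * U1)"] allI impI)
      fix k \<sigma> xN :: real
      assume k: "k \<ge> exp 1" and \<sigma>: "\<sigma> > 0" and xN: "xN \<ge> 0" and reg: "xN + \<epsilon> * \<sigma> > R"
      have k1: "k \<ge> 1" using ek[OF k] .
      have k0: "k > 0" using k1 by simp
      have S0: "\<sigma> powr (- q) * e0 \<sigma> xN \<ge> 0" by (simp add: e0_def)
      have "G \<sigma> k \<le> (1 / k) * (\<sigma> powr (1 - c) / (c - 1) + sqrt (8 * pi) * \<sigma> powr ((1 - c) / 2))"
        unfolding G_def by (rule case_gt1[OF c1 \<sigma> k1])
      then have "(\<sigma> powr (- q) * e0 \<sigma> xN) * G \<sigma> k \<le> (\<sigma> powr (- q) * e0 \<sigma> xN) * ((1 / k) * (\<sigma> powr (1 - c) / (c - 1) + sqrt (8 * pi) * \<sigma> powr ((1 - c) / 2)))"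
        using S0 by (rule mult_left_mono)
      also have "\<dots> = (1 / k) * ((\<sigma> powr (- q) * \<sigma> powr (1 - c)) * e0 \<sigma> xN / (c - 1) + sqrt (8 * pi) * ((\<sigma> powr (- q) * \<sigma> powr ((1 - c) / 2)) * e0 \<sigma> xN))"
        by (simp add: algebra_simps)
      also have "\<dots> = (1 / k) * ((\<sigma> powr (- m2) * e0 \<sigma> xN) / (c - 1) + sqrt (8 * pi) * (\<sigma> powr (- m1) * e0 \<sigma> xN))"
        by (simp only: pow_merge m1_def m2_def)
      also have "\<dots> \<le> (1 / k) * (U2 / (c - 1) + sqrt (8 * pi) * U1)"
        using U1(2)[OF \<sigma> xN reg] U2(2)[OF \<sigma> xN reg] c1 k1
        by (intro mult_left_mono add_mono divide_right_mono) auto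
      finally have "b0 * ((\<sigma> powr (- q) * e0 \<sigma> xN) * G \<sigma> k) \<le> b0 * ((1 / k) * (U2 / (c - 1) + sqrt (8 * pi) * U1))"
        using b0 by (rule mult_left_mono)
      then have "ennreal (b0 * (\<sigma> powr (- q) * e0 \<sigma> xN) * G \<sigma> k) \<le> ennreal (b0 * (U2 / (c - 1) + sqrt (8 * pi) * U1) * (1 / k))"
        by (intro ennreal_leI) (simp add: mult_ac)
      then have "ennreal (b0 * (\<sigma> powr (- q) * e0 \<sigma> xN) * G \<sigma> k) \<le> ennreal (b0 * (U2 / (c - 1) + sqrt (8 * pi) * U1) * (if p < D / 2 then 1 / k else if p = D / 2 then ln k / k else k powr (- D / (2 * p))))"
        using 1 by simp
      then show "(\<integral>\<^sup>+\<tau>. ennreal (indicator {0<..} \<tau> *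
            (((4 * pi * (\<sigma> + k * \<tau>)) powr (- D / 2) * (8 * pi * \<sigma>) powr (-1/2)) powr (1/p)
             * (sqrt 2 * \<sigma> powr (-1/2) * exp (- ((xN + \<tau>)^2) / (8 * \<sigma>))))) \<partial>lborel)
           \<le> ennreal (b0 * (U2 / (c - 1) + sqrt (8 * pi) * U1) * (if p < D / 2 then 1 / k else if p = D / 2 then ln k / k else k powr (- D / (2 * p))))"
        by (rule order_trans[OF AB[OF \<sigma> k0 xN]])
    qed
  next
    case 2
    then have c1: "c = 1" using p by (simp add: c_def field_simps)
    define m2 where "m2 = q + 1/2"
    have m1: "q > 0" and m2: "m2 > 0" using q0 by (auto simp: m2_def)
    obtain U1 where U1: "U1 \<ge> 0" "\<And>\<sigma> xN. \<sigma> > 0 \<Longrightarrow> xN \<ge> 0 \<Longrightarrow> xN + \<epsilon> * \<sigma> > R \<Longrightarrow> \<sigma> powr (- q) * e0 \<sigma> xN \<le> U1"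
      using Ubound0[OF m1 \<epsilon> R] unfolding e0_def by metis
    obtain U2 where U2: "U2 \<ge> 0" "\<And>\<sigma> xN. \<sigma> > 0 \<Longrightarrow> xN \<ge> 0 \<Longrightarrow> xN + \<epsilon> * \<sigma> > R \<Longrightarrow> \<sigma> powr (- m2) * e0 \<sigma> xN \<le> U2"
      using Ubound0[OF m2 \<epsilon> R] unfolding e0_def by metis
    show ?thesis
    proof (intro exI[of _ "b0 * (U1 + U2 + sqrt (8 * pi) * U1)"] allI impI)
      fix k \<sigma> xN :: real
      assume k: "k \<ge> exp 1" and \<sigma>: "\<sigma> > 0" and xN: "xN \<ge> 0" and reg: "xN + \<epsilon> * \<sigma> > R"
      have k1: "k \<ge> 1" using ek[OF k] .
      have k0: "k > 0" using k1 by simp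
      have lnk: "ln k \<ge> 1" using k by (metis exp_gt_zero ln_exp ln_le_cancel_iff order_less_le_trans)
      have S0: "\<sigma> powr (- q) * e0 \<sigma> xN \<ge> 0" by (simp add: e0_def)
      have "G \<sigma> k \<le> (1 / k) * (ln k + \<sigma> powr (-1/2) + sqrt (8 * pi))"
        unfolding G_def c1 by (rule case_eq1[OF \<sigma> k1])
      then have "(\<sigma> powr (- q) * e0 \<sigma> xN) * G \<sigma> k \<le> (\<sigma> powr (- q) * e0 \<sigma> xN) * ((1 / k) * (ln k + \<sigma> powr (-1/2) + sqrt (8 * pi)))"
        using S0 by (rule mult_left_mono)
      also have "\<dots> = (1 / k) * (ln k * (\<sigma> powr (- q) * e0 \<sigma> xN) + (\<sigma> powr (- q) * \<sigma> powr (-1/2)) * e0 \<sigma> xN + sqrt (8 * pi) * (\<sigma> powr (- q) * e0 \<sigma> xN))"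
        by (simp add: algebra_simps)
      also have "(\<sigma> powr (- q) * \<sigma> powr (-1/2)) = \<sigma> powr (- m2)"
        by (simp add: pow_merge m2_def)
      also have "(1 / k) * (ln k * (\<sigma> powr (- q) * e0 \<sigma> xN) + \<sigma> powr (- m2) * e0 \<sigma> xN + sqrt (8 * pi) * (\<sigma> powr (- q) * e0 \<sigma> xN))
          \<le> (1 / k) * (ln k * U1 + U2 + sqrt (8 * pi) * U1)"
        using U1(2)[OF \<sigma> xN reg] U2(2)[OF \<sigma> xN reg] k1 lnk
        by (intro mult_left_mono add_mono) auto
      also have "\<dots> \<le> (1 / k) * (ln k * U1 + ln k * U2 + ln k * (sqrt (8 * pi) * U1))"
        using U1(1) U2(1) lnk k1
        by (intro mult_left_mono add_mono order_refl) (auto intro: mult_le_cancel_right1[THEN iffD2] simp: mult_left_le_one_le)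
      also have "\<dots> = (U1 + U2 + sqrt (8 * pi) * U1) * (ln k / k)"
        by (simp add: algebra_simps)
      finally have "b0 * ((\<sigma> powr (- q) * e0 \<sigma> xN) * G \<sigma> k) \<le> b0 * ((U1 + U2 + sqrt (8 * pi) * U1) * (ln k / k))"
        using b0 by (rule mult_left_mono)
      then have "ennreal (b0 * (\<sigma> powr (- q) * e0 \<sigma> xN) * G \<sigma> k) \<le> ennreal (b0 * (U1 + U2 + sqrt (8 * pi) * U1) * (ln k / k))"
        by (intro ennreal_leI) (simp add: mult_ac)
      then have "ennreal (b0 * (\<sigma> powr (- q) * e0 \<sigma> xN) * G \<sigma> k) \<le> ennreal (b0 * (U1 + U2 + sqrt (8 * pi) * U1) * (if p < D / 2 then 1 / k else if p = D / 2 then ln k / k else k powr (- D / (2 * p))))"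
        using 2 by simp
      then show "(\<integral>\<^sup>+\<tau>. ennreal (indicator {0<..} \<tau> *
            (((4 * pi * (\<sigma> + k * \<tau>)) powr (- D / 2) * (8 * pi * \<sigma>) powr (-1/2)) powr (1/p)
             * (sqrt 2 * \<sigma> powr (-1/2) * exp (- ((xN + \<tau>)^2) / (8 * \<sigma>))))) \<partial>lborel)
           \<le> ennreal (b0 * (U1 + U2 + sqrt (8 * pi) * U1) * (if p < D / 2 then 1 / k else if p = D / 2 then ln k / k else k powr (- D / (2 * p))))"
        by (rule order_trans[OF AB[OF \<sigma> k0 xN]])
    qed
  next
    case 3
    then have c1: "c < 1" using p by (simp add: c_def field_simps)
    define m1 where "m1 = q - (1 - c) / 2"
    have m1: "m1 > 0" using q0 c1 c0 by (auto simp: m1_def)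
    obtain U1 where U1: "U1 \<ge> 0" "\<And>\<sigma> xN. \<sigma> > 0 \<Longrightarrow> xN \<ge> 0 \<Longrightarrow> xN + \<epsilon> * \<sigma> > R \<Longrightarrow> \<sigma> powr (- m1) * e0 \<sigma> xN \<le> U1"
      using Ubound0[OF m1 \<epsilon> R] unfolding e0_def by metis
    show ?thesis
    proof (intro exI[of _ "b0 * (1 / (1 - c) + sqrt (8 * pi)) * U1"] allI impI)
      fix k \<sigma> xN :: real
      assume k: "k \<ge> exp 1" and \<sigma>: "\<sigma> > 0" and xN: "xN \<ge> 0" and reg: "xN + \<epsilon> * \<sigma> > R"
      have k1: "k \<ge> 1" using ek[OF k] .
      have k0: "k > 0" using k1 by simp
      have S0: "\<sigma> powr (- q) * e0 \<sigma> xN \<ge> 0" by (simp add: e0_def)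
      have "G \<sigma> k \<le> k powr (- c) * (1 / (1 - c) + sqrt (8 * pi)) * \<sigma> powr ((1 - c) / 2)"
        unfolding G_def using c0 c1 \<sigma> k1 by (intro case_lt1) auto
      then have "(\<sigma> powr (- q) * e0 \<sigma> xN) * G \<sigma> k \<le> (\<sigma> powr (- q) * e0 \<sigma> xN) * (k powr (- c) * (1 / (1 - c) + sqrt (8 * pi)) * \<sigma> powr ((1 - c) / 2))"
        using S0 by (rule mult_left_mono)
      also have "\<dots> = k powr (- c) * (1 / (1 - c) + sqrt (8 * pi)) * ((\<sigma> powr (- q) * \<sigma> powr ((1 - c) / 2)) * e0 \<sigma> xN)"
        by (simp add: algebra_simps)
      also have "(\<sigma> powr (- q) * \<sigma> powr ((1 - c) / 2)) = \<sigma> powr (- m1)"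
        by (simp add: pow_merge m1_def)
      also have "k powr (- c) * (1 / (1 - c) + sqrt (8 * pi)) * (\<sigma> powr (- m1) * e0 \<sigma> xN) \<le> k powr (- c) * (1 / (1 - c) + sqrt (8 * pi)) * U1"
        using U1(2)[OF \<sigma> xN reg] c1 by (intro mult_left_mono) auto
      finally have "b0 * ((\<sigma> powr (- q) * e0 \<sigma> xN) * G \<sigma> k) \<le> b0 * (k powr (- c) * (1 / (1 - c) + sqrt (8 * pi)) * U1)"
        using b0 by (rule mult_left_mono)
      then have "ennreal (b0 * (\<sigma> powr (- q) * e0 \<sigma> xN) * G \<sigma> k) \<le> ennreal (b0 * (1 / (1 - c) + sqrt (8 * pi)) * U1 * k powr (- c))"
        by (intro ennreal_leI) (simp add: mult_ac)
      moreover have "- c = - D / (2 * p)" by (simp add: c_def)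
      ultimately have "ennreal (b0 * (\<sigma> powr (- q) * e0 \<sigma> xN) * G \<sigma> k) \<le> ennreal (b0 * (1 / (1 - c) + sqrt (8 * pi)) * U1 * (if p < D / 2 then 1 / k else if p = D / 2 then ln k / k else k powr (- D / (2 * p))))"
        using 3 by simp
      then show "(\<integral>\<^sup>+\<tau>. ennreal (indicator {0<..} \<tau> *
            (((4 * pi * (\<sigma> + k * \<tau>)) powr (- D / 2) * (8 * pi * \<sigma>) powr (-1/2)) powr (1/p)
             * (sqrt 2 * \<sigma> powr (-1/2) * exp (- ((xN + \<tau>)^2) / (8 * \<sigma>))))) \<partial>lborel)
           \<le> ennreal (b0 * (1 / (1 - c) + sqrt (8 * pi)) * U1 * (if p < D / 2 then 1 / k else if p = D / 2 then ln k / k else k powr (- D / (2 * p))))"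
        by (rule order_trans[OF AB[OF \<sigma> k0 xN]])
    qed
  qed
qed

lemma Lk_alt:
  assumes "t / \<epsilon> > 0"
  shows "Lk \<epsilon> k x y t = (\<integral>\<tau>. indicator {0<..} \<tau> *\<^sub>R (heat (fst x - fst y) (t / \<epsilon> + k * \<tau>)
             * (- ((snd x + snd y + \<tau>) / (2 * (t / \<epsilon>))) * heat (snd x + snd y + \<tau>) (t / \<epsilon>))) \<partial>lborel)"
  unfolding Lk_def set_lebesgue_integral_def using dheat1_eq[OF assms] by simp

lemma Lk_meas:
  fixes x :: "'a::euclidean_space \<times> real"
  assumes "t / \<epsilon> > 0"
  shows "(\<lambda>y. Lk \<epsilon> k x y t) \<in> borel_measurable lborel"
  unfolding Lk_alt[OF assms] by measurable

lemma G0_meas: "(\<lambda>y. G0 x y s) \<in> borel_measurable lborel"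
  unfolding G0_def reflN_def by measurable

lemma GN_meas: "(\<lambda>y. GN x y s) \<in> borel_measurable lborel"
  unfolding GN_def reflN_def by measurable

lemma integrable_part:
  fixes \<phi> :: "'c::euclidean_space \<Rightarrow> real"
  assumes meas: "set_borel_measurable lebesgue \<Omega> \<phi>" and g: "g \<in> borel_measurable lborel"
    and fin: "(\<integral>\<^sup>+y. ennreal \<bar>indicator \<Omega> y *\<^sub>R (g y * \<phi> y)\<bar> \<partial>lebesgue) \<le> ennreal B"
  shows "integrable lebesgue (\<lambda>y. indicator \<Omega> y *\<^sub>R (g y * \<phi> y))"
proof (rule integrableI_bounded)
  have m: "(\<lambda>y. indicator \<Omega> y *\<^sub>R \<phi> y) \<in> borel_measurable lebesgue"
    using meas unfolding set_borel_measurable_def .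
  have "g \<in> borel_measurable lebesgue" using g by (rule measurable_completion)
  then have "(\<lambda>y. g y * (indicator \<Omega> y *\<^sub>R \<phi> y)) \<in> borel_measurable lebesgue"
    using m by measurable
  then show "(\<lambda>y. indicator \<Omega> y *\<^sub>R (g y * \<phi> y)) \<in> borel_measurable lebesgue"
    by (simp add: mult_ac)
  show "(\<integral>\<^sup>+y. ennreal (norm (indicator \<Omega> y *\<^sub>R (g y * \<phi> y))) \<partial>lebesgue) < \<infinity>"
    using fin by (simp add: order_le_less_trans)
qed

lemma kernel_nn:
  fixes \<phi> :: "'c::euclidean_space \<Rightarrow> real"
  assumes "\<And>y. y \<in> \<Omega> \<Longrightarrow> \<bar>g y\<bar> \<le> h y"
  shows "(\<integral>\<^sup>+y. ennreal \<bar>indicator \<Omega> y *\<^sub>R (g y * \<phi> y)\<bar> \<partial>lebesgue)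
       \<le> (\<integral>\<^sup>+y. ennreal (indicator \<Omega> y * \<bar>\<phi> y\<bar>) * ennreal (h y) \<partial>lebesgue)"
proof (intro nn_integral_mono)
  fix y
  show "ennreal \<bar>indicator \<Omega> y *\<^sub>R (g y * \<phi> y)\<bar> \<le> ennreal (indicator \<Omega> y * \<bar>\<phi> y\<bar>) * ennreal (h y)"
  proof (cases "y \<in> \<Omega>")
    case True
    have "\<bar>g y * \<phi> y\<bar> = \<bar>\<phi> y\<bar> * \<bar>g y\<bar>" by (simp add: abs_mult)
    also have "\<dots> \<le> \<bar>\<phi> y\<bar> * h y" using assms[OF True] by (rule mult_left_mono) simp
    finally have "\<bar>g y * \<phi> y\<bar> \<le> \<bar>\<phi> y\<bar> * h y" .
    moreover have "0 \<le> h y" using assms[OF True] by (meson abs_ge_zero order_trans)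
    ultimately show ?thesis using True by (simp add: ennreal_mult[symmetric] ennreal_leI del: ennreal_mult)
  qed simp
qed

context
  fixes \<phi> :: "'a::euclidean_space \<times> real \<Rightarrow> real" and p \<Phi> :: real
  assumes p: "1 \<le> p"
    and meas: "set_borel_measurable lebesgue Omega \<phi>"
    and phim: "(\<lambda>y. indicator Omega y * \<bar>\<phi> y\<bar> powr p) \<in> borel_measurable lebesgue"
    and Phi: "(\<integral>\<^sup>+y. ennreal (indicator Omega y * \<bar>\<phi> y\<bar> powr p) \<partial>lebesgue) \<le> ennreal \<Phi>"
    and Phi0: "0 \<le> \<Phi>"
begin

lemma GN_nn:
  assumes x: "snd x \<ge> 0" and s: "s > 0"
  shows "(\<integral>\<^sup>+y. ennreal \<bar>indicator Omega y *\<^sub>R (GN x y s * \<phi> y)\<bar> \<partial>lebesgue)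
     \<le> ennreal ((\<Phi> / p + 1) * (((4 * pi * s) powr (- real DIM('a \<times> real) / 2)) powr (1/p) * 2))"
proof -
  have "(\<integral>\<^sup>+y. ennreal \<bar>indicator Omega y *\<^sub>R (GN x y s * \<phi> y)\<bar> \<partial>lebesgue)
     \<le> (\<integral>\<^sup>+y. ennreal (indicator Omega y * \<bar>\<phi> y\<bar>) * ennreal (2 * heat (x - y) s) \<partial>lebesgue)"
    by (rule kernel_nn, rule GN_le[OF x _ s]) (auto simp: Omega_iff)
  then show ?thesis
    by (rule order_trans[OF _ heat_kernel_young[OF p phim Phi Phi0 s]]) simp
qed

lemma G0_nn:
  assumes x: "snd x \<ge> 0" and s: "s > 0"
  shows "(\<integral>\<^sup>+y. ennreal \<bar>indicator Omega y *\<^sub>R (G0 x y s * \<phi> y)\<bar> \<partial>lebesgue)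
     \<le> ennreal ((\<Phi> / p + 1) * (((4 * pi * s) powr (- real DIM('a \<times> real) / 2)) powr (1/p) * 1))"
proof -
  have "(\<integral>\<^sup>+y. ennreal \<bar>indicator Omega y *\<^sub>R (G0 x y s * \<phi> y)\<bar> \<partial>lebesgue)
     \<le> (\<integral>\<^sup>+y. ennreal (indicator Omega y * \<bar>\<phi> y\<bar>) * ennreal (1 * heat (x - y) s) \<partial>lebesgue)"
    by (rule kernel_nn) (use G0_le[OF x _ s] in \<open>force simp: Omega_iff\<close>)
  then show ?thesis
    by (rule order_trans[OF _ heat_kernel_young[OF p phim Phi Phi0 s]]) simp
qed

lemma Lk_nn:
  assumes x: "snd x \<ge> 0" and \<sigma>: "t / \<epsilon> > 0" and k: "k \<ge> 0"
    and W: "(\<integral>\<^sup>+\<tau>. ennreal (indicator {0<..} \<tau> *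
            (((4 * pi * (t / \<epsilon> + k * \<tau>)) powr (- real DIM('a) / 2) * (8 * pi * (t / \<epsilon>)) powr (-1/2)) powr (1/p)
             * (sqrt 2 * (t / \<epsilon>) powr (-1/2) * exp (- ((snd x + \<tau>)^2) / (8 * (t / \<epsilon>)))))) \<partial>lborel) \<le> ennreal w"
    and w0: "0 \<le> w"
  shows "(\<integral>\<^sup>+y. ennreal \<bar>indicator Omega y *\<^sub>R (Lk \<epsilon> k x y t * \<phi> y)\<bar> \<partial>lebesgue) \<le> ennreal ((\<Phi> / p + 1) * w)"
proof -
  have "(\<integral>\<^sup>+y. ennreal \<bar>indicator Omega y *\<^sub>R (Lk \<epsilon> k x y t * \<phi> y)\<bar> \<partial>lebesgue)
     \<le> (\<integral>\<^sup>+y. ennreal (indicator Omega y * \<bar>\<phi> y\<bar>) *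
            (\<integral>\<^sup>+\<tau>. ennreal (indicator {0<..} \<tau> * (heat (fst x - fst y) (t / \<epsilon> + k * \<tau>) * D1 (snd x + snd y + \<tau>) (t / \<epsilon>))) \<partial>lborel) \<partial>lebesgue)"
  proof (intro nn_integral_mono)
    fix y :: "'a \<times> real"
    have "ennreal \<bar>indicator Omega y *\<^sub>R (Lk \<epsilon> k x y t * \<phi> y)\<bar> = ennreal (indicator Omega y * \<bar>\<phi> y\<bar>) * ennreal \<bar>Lk \<epsilon> k x y t\<bar>"
      by (simp add: abs_mult ennreal_mult[symmetric] mult_ac del: ennreal_mult)
    also have "\<dots> \<le> ennreal (indicator Omega y * \<bar>\<phi> y\<bar>) *
            (\<integral>\<^sup>+\<tau>. ennreal (indicator {0<..} \<tau> * (heat (fst x - fst y) (t / \<epsilon> + k * \<tau>) * D1 (snd x + snd y + \<tau>) (t / \<epsilon>))) \<partial>lborel)"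
      by (intro mult_left_mono Lk_bound \<sigma>) simp
    finally show "ennreal \<bar>indicator Omega y *\<^sub>R (Lk \<epsilon> k x y t * \<phi> y)\<bar> \<le> \<dots>" .
  qed
  also have "\<dots> \<le> ennreal ((\<Phi> / p + 1) * w)"
    by (rule tau_kernel_young[OF p phim Phi Phi0 \<sigma> k x W w0])
  finally show ?thesis .
qed

lemma abs_le_from_nn:
  assumes "ennreal \<bar>a\<bar> \<le> ennreal B" "0 \<le> B"
  shows "\<bar>a\<bar> \<le> B"
  using assms by (simp add: ennreal_le_iff)

lemma zN_point:
  assumes x: "snd x \<ge> 0" and s: "t / \<epsilon> > 0"
  shows "\<bar>zN \<epsilon> \<phi> x t\<bar> \<le> (\<Phi> / p + 1) * (((4 * pi * (t / \<epsilon>)) powr (- real DIM('a \<times> real) / 2)) powr (1/p) * 2)"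
proof (rule abs_le_from_nn)
  have "ennreal \<bar>zN \<epsilon> \<phi> x t\<bar> \<le> (\<integral>\<^sup>+y. ennreal \<bar>indicator Omega y *\<^sub>R (GN x y (t / \<epsilon>) * \<phi> y)\<bar> \<partial>lebesgue)"
    unfolding zN_def set_lebesgue_integral_def by (rule abs_integral_le_nn)
  also have "\<dots> \<le> ennreal ((\<Phi> / p + 1) * (((4 * pi * (t / \<epsilon>)) powr (- real DIM('a \<times> real) / 2)) powr (1/p) * 2))" by (rule GN_nn[OF x s])
  finally show "ennreal \<bar>zN \<epsilon> \<phi> x t\<bar> \<le> ennreal ((\<Phi> / p + 1) * (((4 * pi * (t / \<epsilon>)) powr (- real DIM('a \<times> real) / 2)) powr (1/p) * 2))" .
qed (use p Phi0 in simp)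

definition IL :: "real \<Rightarrow> real \<Rightarrow> 'a \<times> real \<Rightarrow> real \<Rightarrow> real" where
  "IL \<epsilon> k x t = integral\<^sup>L lebesgue (\<lambda>y. indicator Omega y *\<^sub>R (Lk \<epsilon> k x y t * \<phi> y))"

lemma zek_split:
  assumes x: "snd x \<ge> 0" and \<sigma>: "t / \<epsilon> > 0" and k: "k \<ge> 0"
  shows "zek \<epsilon> k \<phi> x t = zD \<epsilon> \<phi> x t - 2 * IL \<epsilon> k x t"
proof -
  have i1: "integrable lebesgue (\<lambda>y. indicator Omega y *\<^sub>R (G0 x y (t / \<epsilon>) * \<phi> y))"
    by (rule integrable_part[OF meas G0_meas G0_nn[OF x \<sigma>]])
  have i2: "integrable lebesgue (\<lambda>y. indicator Omega y *\<^sub>R (Lk \<epsilon> k x y t * \<phi> y))"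
    by (rule integrable_part[OF meas Lk_meas[OF \<sigma>] Lk_nn[OF x \<sigma> k W1_bound[OF \<sigma> k p x]]]) simp_all
  have "zek \<epsilon> k \<phi> x t = integral\<^sup>L lebesgue (\<lambda>y. indicator Omega y *\<^sub>R (G0 x y (t / \<epsilon>) * \<phi> y) - 2 * (indicator Omega y *\<^sub>R (Lk \<epsilon> k x y t * \<phi> y)))"
    unfolding zek_def set_lebesgue_integral_def
    by (intro Bochner_Integration.integral_cong) (simp_all add: Psi_Lk algebra_simps)
  also have "\<dots> = integral\<^sup>L lebesgue (\<lambda>y. indicator Omega y *\<^sub>R (G0 x y (t / \<epsilon>) * \<phi> y)) - 2 * IL \<epsilon> k x t"
    using i1 i2 by (simp add: IL_def)
  finally show ?thesis by (simp add: zD_def set_lebesgue_integral_def)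
qed

lemma zD_point:
  assumes x: "snd x \<ge> 0" and s: "t / \<epsilon> > 0"
  shows "\<bar>zD \<epsilon> \<phi> x t\<bar> \<le> (\<Phi> / p + 1) * (((4 * pi * (t / \<epsilon>)) powr (- real DIM('a \<times> real) / 2)) powr (1/p) * 1)"
proof (rule abs_le_from_nn)
  have "ennreal \<bar>zD \<epsilon> \<phi> x t\<bar> \<le> (\<integral>\<^sup>+y. ennreal \<bar>indicator Omega y *\<^sub>R (G0 x y (t / \<epsilon>) * \<phi> y)\<bar> \<partial>lebesgue)"
    unfolding zD_def set_lebesgue_integral_def by (rule abs_integral_le_nn)
  also have "\<dots> \<le> ennreal ((\<Phi> / p + 1) * (((4 * pi * (t / \<epsilon>)) powr (- real DIM('a \<times> real) / 2)) powr (1/p) * 1))" by (rule G0_nn[OF x s])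
  finally show "ennreal \<bar>zD \<epsilon> \<phi> x t\<bar> \<le> ennreal ((\<Phi> / p + 1) * (((4 * pi * (t / \<epsilon>)) powr (- real DIM('a \<times> real) / 2)) powr (1/p) * 1))" .
qed (use p Phi0 in simp)

lemma IL_point:
  assumes x: "snd x \<ge> 0" and \<sigma>: "t / \<epsilon> > 0" and k: "k \<ge> 0"
    and W: "(\<integral>\<^sup>+\<tau>. ennreal (indicator {0<..} \<tau> *
            (((4 * pi * (t / \<epsilon> + k * \<tau>)) powr (- real DIM('a) / 2) * (8 * pi * (t / \<epsilon>)) powr (-1/2)) powr (1/p)
             * (sqrt 2 * (t / \<epsilon>) powr (-1/2) * exp (- ((snd x + \<tau>)^2) / (8 * (t / \<epsilon>)))))) \<partial>lborel) \<le> ennreal w"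
    and w0: "0 \<le> w"
  shows "\<bar>IL \<epsilon> k x t\<bar> \<le> (\<Phi> / p + 1) * w"
proof (rule abs_le_from_nn)
  have "ennreal \<bar>IL \<epsilon> k x t\<bar> \<le> (\<integral>\<^sup>+y. ennreal \<bar>indicator Omega y *\<^sub>R (Lk \<epsilon> k x y t * \<phi> y)\<bar> \<partial>lebesgue)"
    unfolding IL_def by (rule abs_integral_le_nn)
  also have "\<dots> \<le> ennreal ((\<Phi> / p + 1) * w)" by (rule Lk_nn[OF x \<sigma> k W w0])
  finally show "ennreal \<bar>IL \<epsilon> k x t\<bar> \<le> ennreal ((\<Phi> / p + 1) * w)" .
qed (use p Phi0 w0 in simp)

lemma zek_point1:
  assumes x: "snd x \<ge> 0" and \<sigma>: "t / \<epsilon> > 0" and k: "k \<ge> 0"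
  shows "\<bar>zek \<epsilon> k \<phi> x t\<bar> \<le> (\<Phi> / p + 1) * (((4 * pi * (t / \<epsilon>)) powr (- real DIM('a \<times> real) / 2)) powr (1/p) * 1)
     + 2 * ((\<Phi> / p + 1) * (((4 * pi * (t / \<epsilon>)) powr (- real DIM('a) / 2) * (8 * pi * (t / \<epsilon>)) powr (-1/2)) powr (1/p)
                    * (sqrt 2 * (t / \<epsilon>) powr (-1/2) * (8 * pi * (t / \<epsilon>)) powr (1/2))))"
proof -
  have "\<bar>IL \<epsilon> k x t\<bar> \<le> (\<Phi> / p + 1) * (((4 * pi * (t / \<epsilon>)) powr (- real DIM('a) / 2) * (8 * pi * (t / \<epsilon>)) powr (-1/2)) powr (1/p)
                    * (sqrt 2 * (t / \<epsilon>) powr (-1/2) * (8 * pi * (t / \<epsilon>)) powr (1/2)))"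
    by (rule IL_point[OF x \<sigma> k W1_bound[OF \<sigma> k p x]]) simp_all
  moreover have "\<bar>zD \<epsilon> \<phi> x t\<bar> \<le> (\<Phi> / p + 1) * (((4 * pi * (t / \<epsilon>)) powr (- real DIM('a \<times> real) / 2)) powr (1/p) * 1)"
    by (rule zD_point[OF x \<sigma>])
  ultimately show ?thesis unfolding zek_split[OF x \<sigma> k] by linarith
qed

lemma zek_point3:
  assumes x: "snd x \<ge> 0" and \<sigma>: "t / \<epsilon> > 0" and k: "k \<ge> 0"
    and W: "(\<integral>\<^sup>+\<tau>. ennreal (indicator {0<..} \<tau> *
            (((4 * pi * (t / \<epsilon> + k * \<tau>)) powr (- real DIM('a) / 2) * (8 * pi * (t / \<epsilon>)) powr (-1/2)) powr (1/p)
             * (sqrt 2 * (t / \<epsilon>) powr (-1/2) * exp (- ((snd x + \<tau>)^2) / (8 * (t / \<epsilon>)))))) \<partial>lborel) \<le> ennreal w"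
    and w0: "0 \<le> w"
  shows "\<bar>zek \<epsilon> k \<phi> x t - zD \<epsilon> \<phi> x t\<bar> \<le> 2 * ((\<Phi> / p + 1) * w)"
  using IL_point[OF x \<sigma> k W w0] unfolding zek_split[OF x \<sigma> k] by simp

end

lemma epsconv:
  fixes a r T \<epsilon> t :: real
  assumes a: "a > 0" and r: "r \<ge> 0" and T: "T > 0" and \<epsilon>: "\<epsilon> > 0" and t: "t > T"
  shows "(a * (t / \<epsilon>)) powr (- r) \<le> (a * T) powr (- r) * \<epsilon> powr r"
proof -
  have "(a * (t / \<epsilon>)) powr (- r) \<le> (a * (T / \<epsilon>)) powr (- r)"
    using a r T \<epsilon> t by (intro powr_mono2') (auto intro: mult_left_mono divide_right_mono)
  also have "\<dots> = (a * T) powr (- r) * \<epsilon> powr r"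
  proof -
    have "a * (T / \<epsilon>) = (a * T) / \<epsilon>" by simp
    then have "(a * (T / \<epsilon>)) powr (- r) = inverse ((a * T) powr r / \<epsilon> powr r)"
      using a T \<epsilon> by (simp add: powr_minus powr_divide)
    also have "\<dots> = inverse ((a * T) powr r) * \<epsilon> powr r"
      by (simp add: divide_inverse)
    finally show ?thesis by (simp add: powr_minus)
  qed
  finally show ?thesis .
qed

lemma t1_bound:
  fixes Nr p T \<epsilon> t :: real
  assumes p: "p \<ge> 1" and Nr: "Nr \<ge> 0" and T: "T > 0" and \<epsilon>: "\<epsilon> > 0" and t: "t > T"
  shows "((4 * pi * (t / \<epsilon>)) powr (- Nr / 2)) powr (1/p) \<le> (4 * pi * T) powr (- (Nr / (2 * p))) * \<epsilon> powr (Nr / (2 * p))"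
proof -
  have "((4 * pi * (t / \<epsilon>)) powr (- Nr / 2)) powr (1/p) = (4 * pi * (t / \<epsilon>)) powr (- (Nr / (2 * p)))"
    by (simp add: powr_powr)
  also have "\<dots> \<le> (4 * pi * T) powr (- (Nr / (2 * p))) * \<epsilon> powr (Nr / (2 * p))"
    using p Nr T \<epsilon> t by (intro epsconv) auto
  finally show ?thesis .
qed

lemma t2_bound:
  fixes D p T \<epsilon> t :: real
  assumes p: "p \<ge> 1" and D: "D \<ge> 0" and T: "T > 0" and \<epsilon>: "\<epsilon> > 0" and t: "t > T"
  shows "((4 * pi * (t / \<epsilon>)) powr (- D / 2) * (8 * pi * (t / \<epsilon>)) powr (-1/2)) powr (1/p)
                    * (sqrt 2 * (t / \<epsilon>) powr (-1/2) * (8 * pi * (t / \<epsilon>)) powr (1/2))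
         \<le> ((4 * pi * T) powr (- (D / (2 * p))) * (8 * pi * T) powr (- (1 / (2 * p))) * (sqrt 2 * (8 * pi) powr (1/2)))
            * \<epsilon> powr ((D + 1) / (2 * p))"
proof -
  define \<sigma> where "\<sigma> = t / \<epsilon>"
  have \<sigma>: "\<sigma> > 0" using T \<epsilon> t by (simp add: \<sigma>_def)
  have e1: "((4 * pi * \<sigma>) powr (- D / 2) * (8 * pi * \<sigma>) powr (-1/2)) powr (1/p)
     = (4 * pi * \<sigma>) powr (- (D / (2 * p))) * (8 * pi * \<sigma>) powr (- (1 / (2 * p)))"
    using \<sigma> by (simp add: powr_mult powr_powr)
  have e2: "sqrt 2 * \<sigma> powr (-1/2) * (8 * pi * \<sigma>) powr (1/2) = sqrt 2 * (8 * pi) powr (1/2)"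
  proof -
    have "(8 * pi * \<sigma>) powr (1/2) = (8 * pi) powr (1/2) * \<sigma> powr (1/2)" using \<sigma> by (simp add: powr_mult)
    moreover have "\<sigma> powr (-1/2) * \<sigma> powr (1/2) = 1" using \<sigma> by (simp add: powr_add[symmetric])
    moreover have "sqrt 2 * \<sigma> powr (-1/2) * ((8 * pi) powr (1/2) * \<sigma> powr (1/2)) = sqrt 2 * (8 * pi) powr (1/2) * (\<sigma> powr (-1/2) * \<sigma> powr (1/2))"
      by (simp only: mult_ac)
    ultimately show ?thesis by simp
  qed
  have b1: "(4 * pi * \<sigma>) powr (- (D / (2 * p))) \<le> (4 * pi * T) powr (- (D / (2 * p))) * \<epsilon> powr (D / (2 * p))"
    unfolding \<sigma>_def using p D T \<epsilon> t by (intro epsconv) auto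
  have b2: "(8 * pi * \<sigma>) powr (- (1 / (2 * p))) \<le> (8 * pi * T) powr (- (1 / (2 * p))) * \<epsilon> powr (1 / (2 * p))"
    unfolding \<sigma>_def using p T \<epsilon> t by (intro epsconv) auto
  have "(4 * pi * \<sigma>) powr (- (D / (2 * p))) * (8 * pi * \<sigma>) powr (- (1 / (2 * p)))
      \<le> ((4 * pi * T) powr (- (D / (2 * p))) * \<epsilon> powr (D / (2 * p))) * ((8 * pi * T) powr (- (1 / (2 * p))) * \<epsilon> powr (1 / (2 * p)))"
    using b1 b2 by (intro mult_mono) auto
  also have "\<epsilon> powr (D / (2 * p)) * \<epsilon> powr (1 / (2 * p)) = \<epsilon> powr ((D + 1) / (2 * p))"
    by (simp add: powr_add[symmetric] add_divide_distrib)
  then have "((4 * pi * T) powr (- (D / (2 * p))) * \<epsilon> powr (D / (2 * p))) * ((8 * pi * T) powr (- (1 / (2 * p))) * \<epsilon> powr (1 / (2 * p)))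
      = (4 * pi * T) powr (- (D / (2 * p))) * (8 * pi * T) powr (- (1 / (2 * p))) * \<epsilon> powr ((D + 1) / (2 * p))"
  proof -
    have "((4 * pi * T) powr (- (D / (2 * p))) * \<epsilon> powr (D / (2 * p))) * ((8 * pi * T) powr (- (1 / (2 * p))) * \<epsilon> powr (1 / (2 * p)))
      = (4 * pi * T) powr (- (D / (2 * p))) * (8 * pi * T) powr (- (1 / (2 * p))) * (\<epsilon> powr (D / (2 * p)) * \<epsilon> powr (1 / (2 * p)))"
      by (simp only: mult_ac)
    then show ?thesis using \<open>\<epsilon> powr (D / (2 * p)) * \<epsilon> powr (1 / (2 * p)) = \<epsilon> powr ((D + 1) / (2 * p))\<close> by simp
  qed
  finally have "(4 * pi * \<sigma>) powr (- (D / (2 * p))) * (8 * pi * \<sigma>) powr (- (1 / (2 * p)))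
      \<le> (4 * pi * T) powr (- (D / (2 * p))) * (8 * pi * T) powr (- (1 / (2 * p))) * \<epsilon> powr ((D + 1) / (2 * p))" .
  then have "((4 * pi * \<sigma>) powr (- D / 2) * (8 * pi * \<sigma>) powr (-1/2)) powr (1/p) * (sqrt 2 * (8 * pi) powr (1/2))
      \<le> (4 * pi * T) powr (- (D / (2 * p))) * (8 * pi * T) powr (- (1 / (2 * p))) * \<epsilon> powr ((D + 1) / (2 * p)) * (sqrt 2 * (8 * pi) powr (1/2))"
    unfolding e1 by (rule mult_right_mono) simp
  then show ?thesis unfolding \<sigma>_def[symmetric] e2 by (simp add: mult_ac)
qed

theorem theorem5p2:
  fixes \<phi> :: "'a::euclidean_space \<times> real \<Rightarrow> real" and p :: real
  defines "N \<equiv> DIM('a) + 1"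
  assumes p: "1 \<le> p"
    and meas: "set_borel_measurable lebesgue Omega \<phi>"
    and Lp: "set_integrable lebesgue Omega (\<lambda>y. \<bar>\<phi> y\<bar> powr p)"
  shows "(\<forall>T>0. \<forall>k>0. \<exists>C \<epsilon>0. \<epsilon>0 > 0 \<and>
            (\<forall>\<epsilon>. 0 < \<epsilon> \<and> \<epsilon> < \<epsilon>0 \<longrightarrow>
              (\<forall>x\<in>closure Omega. \<forall>t>T. \<bar>zek \<epsilon> k \<phi> x t\<bar> \<le> C * \<epsilon> powr (real N / (2 * p)))))
       \<and> (\<forall>T>0. \<exists>C \<epsilon>0. \<epsilon>0 > 0 \<and>
            (\<forall>\<epsilon>. 0 < \<epsilon> \<and> \<epsilon> < \<epsilon>0 \<longrightarrow>
              (\<forall>x\<in>closure Omega. \<forall>t>T. \<bar>zN \<epsilon> \<phi> x t\<bar> \<le> C * \<epsilon> powr (real N / (2 * p)))))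
       \<and> (\<forall>R>0. \<forall>\<epsilon>>0. \<exists>C K. K > 1 \<and>
            (\<forall>k\<ge>K. \<forall>(x, t)\<in>Qset R. \<bar>zek \<epsilon> k \<phi> x t - zD \<epsilon> \<phi> x t\<bar> \<le> C * fp N p k))"
proof -
  have Li: "integrable lebesgue (\<lambda>y. indicator Omega y * \<bar>\<phi> y\<bar> powr p)"
    using Lp unfolding set_integrable_def by simp
  define \<Phi> where "\<Phi> = integral\<^sup>L lebesgue (\<lambda>y. indicator Omega y * \<bar>\<phi> y\<bar> powr p)"
  have phim: "(\<lambda>y. indicator Omega y * \<bar>\<phi> y\<bar> powr p) \<in> borel_measurable lebesgue"
    using Li by (rule borel_measurable_integrable)
  have Phi_eq: "(\<integral>\<^sup>+y. ennreal (indicator Omega y * \<bar>\<phi> y\<bar> powr p) \<partial>lebesgue) = ennreal \<Phi>"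
    unfolding \<Phi>_def by (rule nn_integral_eq_integral[OF Li]) simp
  then have Phi: "(\<integral>\<^sup>+y. ennreal (indicator Omega y * \<bar>\<phi> y\<bar> powr p) \<partial>lebesgue) \<le> ennreal \<Phi>" by simp
  have Phi0: "0 \<le> \<Phi>" unfolding \<Phi>_def by (rule integral_nonneg_AE) simp
  note ctx = p meas phim Phi Phi0
  have Nr: "real N = real DIM('a) + 1" by (simp add: N_def)
  have DIMp: "real DIM('a \<times> real) = real N" by (simp add: N_def)
  have xcl: "snd x \<ge> 0" if "x \<in> closure Omega" for x :: "'a \<times> real"
    using that by (auto simp: closure_Omega)
  have K0: "0 \<le> \<Phi> / p + 1" using Phi0 p by simp
  show ?thesis
  proof (intro conjI allI impI)
    fix T k :: real
    assume T: "T > 0" and k: "k > 0"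
    define C where "C = (\<Phi> / p + 1) * ((4 * pi * T) powr (- (real N / (2 * p))) * 1)
       + 2 * ((\<Phi> / p + 1) * ((4 * pi * T) powr (- (real DIM('a) / (2 * p))) * (8 * pi * T) powr (- (1 / (2 * p))) * (sqrt 2 * (8 * pi) powr (1/2))))"
    show "\<exists>C \<epsilon>0. \<epsilon>0 > 0 \<and> (\<forall>\<epsilon>. 0 < \<epsilon> \<and> \<epsilon> < \<epsilon>0 \<longrightarrow>
              (\<forall>x\<in>closure Omega. \<forall>t>T. \<bar>zek \<epsilon> k \<phi> x t\<bar> \<le> C * \<epsilon> powr (real N / (2 * p))))"
    proof (rule exI[of _ C], rule exI[of _ "1::real"], intro conjI allI impI ballI)
      fix \<epsilon> :: real and x :: "'a \<times> real" and t :: real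
      assume e: "0 < \<epsilon> \<and> \<epsilon> < 1" and x: "x \<in> closure Omega" and t: "t > T"
      have \<epsilon>: "\<epsilon> > 0" using e by simp
      have \<sigma>: "t / \<epsilon> > 0" using \<epsilon> t T by simp
      have a1: "((4 * pi * (t / \<epsilon>)) powr (- real DIM('a \<times> real) / 2)) powr (1/p) * 1
          \<le> (4 * pi * T) powr (- (real N / (2 * p))) * 1 * \<epsilon> powr (real N / (2 * p))"
        using t1_bound[OF p _ T \<epsilon> t, of "real N"] DIMp by simp
      have a2: "((4 * pi * (t / \<epsilon>)) powr (- real DIM('a) / 2) * (8 * pi * (t / \<epsilon>)) powr (-1/2)) powr (1/p)
                    * (sqrt 2 * (t / \<epsilon>) powr (-1/2) * (8 * pi * (t / \<epsilon>)) powr (1/2))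
         \<le> ((4 * pi * T) powr (- (real DIM('a) / (2 * p))) * (8 * pi * T) powr (- (1 / (2 * p))) * (sqrt 2 * (8 * pi) powr (1/2)))
            * \<epsilon> powr (real N / (2 * p))"
        using t2_bound[OF p _ T \<epsilon> t, of "real DIM('a)"] Nr by simp
      have "\<bar>zek \<epsilon> k \<phi> x t\<bar> \<le> (\<Phi> / p + 1) * (((4 * pi * (t / \<epsilon>)) powr (- real DIM('a \<times> real) / 2)) powr (1/p) * 1)
         + 2 * ((\<Phi> / p + 1) * (((4 * pi * (t / \<epsilon>)) powr (- real DIM('a) / 2) * (8 * pi * (t / \<epsilon>)) powr (-1/2)) powr (1/p)
                    * (sqrt 2 * (t / \<epsilon>) powr (-1/2) * (8 * pi * (t / \<epsilon>)) powr (1/2))))"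
        by (rule zek_point1[OF ctx xcl[OF x] \<sigma>]) (use k in simp)
      also have "\<dots> \<le> (\<Phi> / p + 1) * ((4 * pi * T) powr (- (real N / (2 * p))) * 1 * \<epsilon> powr (real N / (2 * p)))
         + 2 * ((\<Phi> / p + 1) * (((4 * pi * T) powr (- (real DIM('a) / (2 * p))) * (8 * pi * T) powr (- (1 / (2 * p))) * (sqrt 2 * (8 * pi) powr (1/2)))
            * \<epsilon> powr (real N / (2 * p))))"
        by (intro add_mono mult_left_mono a1 a2 K0) simp
      also have "\<dots> = C * \<epsilon> powr (real N / (2 * p))"
        by (simp add: C_def algebra_simps)
      finally show "\<bar>zek \<epsilon> k \<phi> x t\<bar> \<le> C * \<epsilon> powr (real N / (2 * p))" .
    qed simp
  next
    fix T :: real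
    assume T: "T > 0"
    define C where "C = (\<Phi> / p + 1) * ((4 * pi * T) powr (- (real N / (2 * p))) * 2)"
    show "\<exists>C \<epsilon>0. \<epsilon>0 > 0 \<and> (\<forall>\<epsilon>. 0 < \<epsilon> \<and> \<epsilon> < \<epsilon>0 \<longrightarrow>
              (\<forall>x\<in>closure Omega. \<forall>t>T. \<bar>zN \<epsilon> \<phi> x t\<bar> \<le> C * \<epsilon> powr (real N / (2 * p))))"
    proof (rule exI[of _ C], rule exI[of _ "1::real"], intro conjI allI impI ballI)
      fix \<epsilon> :: real and x :: "'a \<times> real" and t :: real
      assume e: "0 < \<epsilon> \<and> \<epsilon> < 1" and x: "x \<in> closure Omega" and t: "t > T"
      have \<epsilon>: "\<epsilon> > 0" using e by simp
      have \<sigma>: "t / \<epsilon> > 0" using \<epsilon> t T by simp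
      have a1: "((4 * pi * (t / \<epsilon>)) powr (- real DIM('a \<times> real) / 2)) powr (1/p) * 2
          \<le> (4 * pi * T) powr (- (real N / (2 * p))) * 2 * \<epsilon> powr (real N / (2 * p))"
        using t1_bound[OF p _ T \<epsilon> t, of "real N"] DIMp by simp
      have "\<bar>zN \<epsilon> \<phi> x t\<bar> \<le> (\<Phi> / p + 1) * (((4 * pi * (t / \<epsilon>)) powr (- real DIM('a \<times> real) / 2)) powr (1/p) * 2)"
        by (rule zN_point[OF ctx xcl[OF x] \<sigma>])
      also have "\<dots> \<le> (\<Phi> / p + 1) * ((4 * pi * T) powr (- (real N / (2 * p))) * 2 * \<epsilon> powr (real N / (2 * p)))"
        by (intro mult_left_mono a1 K0)
      also have "\<dots> = C * \<epsilon> powr (real N / (2 * p))"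
        by (simp add: C_def algebra_simps)
      finally show "\<bar>zN \<epsilon> \<phi> x t\<bar> \<le> C * \<epsilon> powr (real N / (2 * p))" .
    qed simp
  next
    fix R \<epsilon> :: real
    assume R: "R > 0" and \<epsilon>: "\<epsilon> > 0"
    define F where "F k = (if p < real DIM('a) / 2 then 1 / k else if p = real DIM('a) / 2 then ln k / k else k powr (- real DIM('a) / (2 * p)))" for k
    obtain Cw where Cw: "\<forall>k \<ge> exp 1. \<forall>\<sigma> xN. \<sigma> > 0 \<longrightarrow> xN \<ge> 0 \<longrightarrow> xN + \<epsilon> * \<sigma> > R \<longrightarrow>
           (\<integral>\<^sup>+\<tau>. ennreal (indicator {0<..} \<tau> *
            (((4 * pi * (\<sigma> + k * \<tau>)) powr (- real DIM('a) / 2) * (8 * pi * \<sigma>) powr (-1/2)) powr (1/p)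
             * (sqrt 2 * \<sigma> powr (-1/2) * exp (- ((xN + \<tau>)^2) / (8 * \<sigma>))))) \<partial>lborel)
           \<le> ennreal (Cw * F k)"
      using claim3_W[OF _ p \<epsilon> R, of "real DIM('a)"] unfolding F_def by auto
    define Cw' where "Cw' = max Cw 0"
    have Cw'0: "Cw' \<ge> 0" by (simp add: Cw'_def)
    show "\<exists>C K. K > 1 \<and> (\<forall>k\<ge>K. \<forall>(x, t)\<in>Qset R. \<bar>zek \<epsilon> k \<phi> x t - zD \<epsilon> \<phi> x t\<bar> \<le> C * fp N p k)"
    proof (rule exI[of _ "2 * ((\<Phi> / p + 1) * Cw')"], rule exI[of _ "exp 1"], intro conjI allI impI ballI)
      show "exp 1 > (1::real)" by simp
      fix k :: real and z :: "('a \<times> real) \<times> real"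
      assume k: "exp 1 \<le> k" and z: "z \<in> Qset R"
      obtain x t where zxt: "z = (x, t)" by (cases z)
      have x: "x \<in> closure Omega" and t: "t > 0" and reg: "snd x + t > R"
        using z unfolding zxt Qset_def by auto
      have k1: "k \<ge> 1" using k exp_ge_add_one_self[of 1] by linarith
      have F0: "F k \<ge> 0" using k1 by (simp add: F_def)
      have \<sigma>: "t / \<epsilon> > 0" using t \<epsilon> by simp
      have W0: "(\<integral>\<^sup>+\<tau>. ennreal (indicator {0<..} \<tau> *
            (((4 * pi * (t / \<epsilon> + k * \<tau>)) powr (- real DIM('a) / 2) * (8 * pi * (t / \<epsilon>)) powr (-1/2)) powr (1/p)
             * (sqrt 2 * (t / \<epsilon>) powr (-1/2) * exp (- ((snd x + \<tau>)^2) / (8 * (t / \<epsilon>)))))) \<partial>lborel)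
           \<le> ennreal (Cw * F k)"
      proof -
        have r: "snd x + \<epsilon> * (t / \<epsilon>) > R" using reg \<epsilon> by simp
        show ?thesis by (rule Cw[rule_format, OF k \<sigma> xcl[OF x] r])
      qed
      also have "\<dots> \<le> ennreal (Cw' * F k)"
        using F0 by (intro ennreal_leI mult_right_mono) (auto simp: Cw'_def)
      finally have W: "(\<integral>\<^sup>+\<tau>. ennreal (indicator {0<..} \<tau> *
            (((4 * pi * (t / \<epsilon> + k * \<tau>)) powr (- real DIM('a) / 2) * (8 * pi * (t / \<epsilon>)) powr (-1/2)) powr (1/p)
             * (sqrt 2 * (t / \<epsilon>) powr (-1/2) * exp (- ((snd x + \<tau>)^2) / (8 * (t / \<epsilon>)))))) \<partial>lborel)
           \<le> ennreal (Cw' * F k)" .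
      have "\<bar>zek \<epsilon> k \<phi> x t - zD \<epsilon> \<phi> x t\<bar> \<le> 2 * ((\<Phi> / p + 1) * (Cw' * F k))"
        by (rule zek_point3[OF ctx xcl[OF x] \<sigma> _ W]) (use k1 Cw'0 F0 in simp_all)
      moreover have "fp N p k = F k" by (simp add: fp_def F_def Nr)
      ultimately show "case z of (x, t) \<Rightarrow> \<bar>zek \<epsilon> k \<phi> x t - zD \<epsilon> \<phi> x t\<bar> \<le> 2 * ((\<Phi> / p + 1) * Cw') * fp N p k"
        unfolding zxt by (simp add: mult_ac)
    qed
  qed
qed

end
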